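(* Let $f:A\to B$ be a ring homomorphism, $\mathfrak b$ an ideal of $B$, and $A\bowtie^f\mathfrak b:=\{(a,f(a)+b): a\in A,\ b\in\mathfrak b\}\subseteq A\times B$. (1) If $A\bowtie^f\mathfrak b$ is a coherent ring, then $A$ is a coherent ring. (2) If $A$ is a coherent ring and $\mathfrak b$ is a coherent $A$-module (with the structure induced by $f$, $a\cdot x=f(a)x$), then $A\bowtie^f\mathfrak b$ is a coherent ring.
   Context: All rings are commutative with identity. A module $M$ over a ring $R$ is coherent if it is finitely generated and every finitely generated submodule of $M$ is finitely presented; a ring $R$ is coherent if it is coherent as a module over itself (every finitely generated ideal is finitely presented). *)

theory Defs
  imports "HOL-Algebra.Algebra"
begin

definition lin_comb :: "('a, 'm) module \<Rightarrow> nat \<Rightarrow> (nat \<Rightarrow> 'a) \<Rightarrow> (nat \<Rightarrow> 'm) \<Rightarrow> 'm" where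
  "lin_comb M n c g = finsum M (\<lambda>i. c i \<odot>\<^bsub>M\<^esub> g i) {..<n}"

definition span_gens :: "('a, 'n) ring_scheme \<Rightarrow> ('a, 'm) module \<Rightarrow> nat \<Rightarrow> (nat \<Rightarrow> 'm) \<Rightarrow> 'm set" where
  "span_gens R M n g = {lin_comb M n c g | c. c \<in> {..<n} \<rightarrow> carrier R}"

definition fin_gen :: "('a, 'n) ring_scheme \<Rightarrow> ('a, 'm) module \<Rightarrow> 'm set \<Rightarrow> bool" where
  "fin_gen R M N \<longleftrightarrow> (\<exists>n g. g \<in> {..<n} \<rightarrow> N \<and> N = span_gens R M n g)"

definition free_module :: "('a, 'n) ring_scheme \<Rightarrow> nat \<Rightarrow> ('a, nat \<Rightarrow> 'a) module" where
  "free_module R n =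
     \<lparr>carrier = {..<n} \<rightarrow>\<^sub>E carrier R,
      monoid.mult = (\<lambda>c d. \<lambda>i\<in>{..<n}. c i \<otimes>\<^bsub>R\<^esub> d i),
      monoid.one = (\<lambda>i\<in>{..<n}. \<one>\<^bsub>R\<^esub>),
      ring.zero = (\<lambda>i\<in>{..<n}. \<zero>\<^bsub>R\<^esub>),
      ring.add = (\<lambda>c d. \<lambda>i\<in>{..<n}. c i \<oplus>\<^bsub>R\<^esub> d i),
      module.smult = (\<lambda>r c. \<lambda>i\<in>{..<n}. r \<otimes>\<^bsub>R\<^esub> c i)\<rparr>"

definition relations :: "('a, 'n) ring_scheme \<Rightarrow> ('a, 'm) module \<Rightarrow> nat \<Rightarrow> (nat \<Rightarrow> 'm) \<Rightarrow> (nat \<Rightarrow> 'a) set" where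
  "relations R M n g = {c \<in> {..<n} \<rightarrow>\<^sub>E carrier R. lin_comb M n c g = \<zero>\<^bsub>M\<^esub>}"

definition fin_pres :: "('a, 'n) ring_scheme \<Rightarrow> ('a, 'm) module \<Rightarrow> bool" where
  "fin_pres R M \<longleftrightarrow> (\<exists>n g. g \<in> {..<n} \<rightarrow> carrier M \<and> carrier M = span_gens R M n g \<and>
                        fin_gen R (free_module R n) (relations R M n g))"

definition coherent_module :: "('a, 'n) ring_scheme \<Rightarrow> ('a, 'm) module \<Rightarrow> bool" where
  "coherent_module R M \<longleftrightarrow> fin_gen R M (carrier M) \<and>
     (\<forall>N. N \<subseteq> carrier M \<and> fin_gen R M N \<longrightarrow> fin_pres R (M\<lparr>carrier := N\<rparr>))"

definition ring_module :: "('a, 'n) ring_scheme \<Rightarrow> ('a, 'a) module" where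
  "ring_module R = \<lparr>carrier = carrier R, monoid.mult = monoid.mult R, monoid.one = monoid.one R, ring.zero = ring.zero R,
                    ring.add = ring.add R, module.smult = monoid.mult R\<rparr>"

definition coherent_ring :: "('a, 'n) ring_scheme \<Rightarrow> bool" where
  "coherent_ring R \<longleftrightarrow> coherent_module R (ring_module R)"

definition ideal_module_via ::
  "('a, 'n) ring_scheme \<Rightarrow> ('b, 'm) ring_scheme \<Rightarrow> ('a \<Rightarrow> 'b) \<Rightarrow> 'b set \<Rightarrow> ('a, 'b) module" where
  "ideal_module_via A B f b = \<lparr>carrier = b, monoid.mult = monoid.mult B, monoid.one = monoid.one B, ring.zero = ring.zero B,
                               ring.add = ring.add B, module.smult = (\<lambda>a x. f a \<otimes>\<^bsub>B\<^esub> x)\<rparr>"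

definition amalg_carrier ::
  "('a, 'n) ring_scheme \<Rightarrow> ('b, 'm) ring_scheme \<Rightarrow> ('a \<Rightarrow> 'b) \<Rightarrow> 'b set \<Rightarrow> ('a \<times> 'b) set" where
  "amalg_carrier A B f b = {(a, f a \<oplus>\<^bsub>B\<^esub> y) | a y. a \<in> carrier A \<and> y \<in> b}"

definition amalg ::
  "('a, 'n) ring_scheme \<Rightarrow> ('b, 'm) ring_scheme \<Rightarrow> ('a \<Rightarrow> 'b) \<Rightarrow> 'b set \<Rightarrow> ('a \<times> 'b) ring" where
  "amalg A B f b = (RDirProd A B)\<lparr>carrier := amalg_carrier A B f b\<rparr>"

end

theory Submission
  imports Defs
begin


definition linmap :: "('a,'n) ring_scheme \<Rightarrow> ('a,'m) module \<Rightarrow> ('a,'k) module \<Rightarrow> ('m \<Rightarrow> 'k) \<Rightarrow> bool" where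
 "linmap R M N \<phi> \<longleftrightarrow> \<phi> \<in> carrier M \<rightarrow> carrier N \<and>
    (\<forall>x\<in>carrier M. \<forall>y\<in>carrier M. \<phi> (x \<oplus>\<^bsub>M\<^esub> y) = \<phi> x \<oplus>\<^bsub>N\<^esub> \<phi> y) \<and>
    (\<forall>a\<in>carrier R. \<forall>x\<in>carrier M. \<phi> (a \<odot>\<^bsub>M\<^esub> x) = a \<odot>\<^bsub>N\<^esub> \<phi> x)"

lemma funcset_lessThan_mem[intro]: "f \<in> {..<n} \<rightarrow> Y \<Longrightarrow> i < n \<Longrightarrow> f i \<in> Y"
  by auto

locale fmod = module R M for R :: "('a,'n) ring_scheme" and M :: "('a,'b) module"

context fmod
begin

lemma lc_0[simp]: "lin_comb M 0 c g = \<zero>\<^bsub>M\<^esub>"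
  by (simp add: lin_comb_def)

lemma lc_closed[intro]: "c \<in> {..<n} \<rightarrow> carrier R \<Longrightarrow> g \<in> {..<n} \<rightarrow> carrier M \<Longrightarrow> lin_comb M n c g \<in> carrier M"
  unfolding lin_comb_def by (rule M.finsum_closed) auto

lemma lc_Suc: "c \<in> {..<Suc n} \<rightarrow> carrier R \<Longrightarrow> g \<in> {..<Suc n} \<rightarrow> carrier M \<Longrightarrow>
   lin_comb M (Suc n) c g = lin_comb M n c g \<oplus>\<^bsub>M\<^esub> c n \<odot>\<^bsub>M\<^esub> g n"
proof -
  assume c: "c \<in> {..<Suc n} \<rightarrow> carrier R" and g: "g \<in> {..<Suc n} \<rightarrow> carrier M"
  have "lin_comb M (Suc n) c g = c n \<odot>\<^bsub>M\<^esub> g n \<oplus>\<^bsub>M\<^esub> lin_comb M n c g"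
    unfolding lin_comb_def lessThan_Suc using c g
    by (subst M.finsum_insert) (auto simp: Pi_iff)
  also have "\<dots> = lin_comb M n c g \<oplus>\<^bsub>M\<^esub> c n \<odot>\<^bsub>M\<^esub> g n"
    using c g by (intro M.a_comm) (auto intro!: lc_closed simp: Pi_iff)
  finally show ?thesis .
qed

lemma lc_cong:
  assumes "\<And>i. i < n \<Longrightarrow> c i = c' i" "\<And>i. i < n \<Longrightarrow> g i = g' i"
    "c \<in> {..<n} \<rightarrow> carrier R" "g \<in> {..<n} \<rightarrow> carrier M"
  shows "lin_comb M n c g = lin_comb M n c' g'"
  unfolding lin_comb_def using assms by (intro M.finsum_cong') (auto simp: Pi_iff)

lemma lc_add_coeff:
  assumes "c \<in> {..<n} \<rightarrow> carrier R" "d \<in> {..<n} \<rightarrow> carrier R" "g \<in> {..<n} \<rightarrow> carrier M"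
  shows "lin_comb M n (\<lambda>i. c i \<oplus>\<^bsub>R\<^esub> d i) g = lin_comb M n c g \<oplus>\<^bsub>M\<^esub> lin_comb M n d g"
proof -
  have "lin_comb M n (\<lambda>i. c i \<oplus>\<^bsub>R\<^esub> d i) g = finsum M (\<lambda>i. c i \<odot>\<^bsub>M\<^esub> g i \<oplus>\<^bsub>M\<^esub> d i \<odot>\<^bsub>M\<^esub> g i) {..<n}"
    unfolding lin_comb_def using assms by (intro M.finsum_cong') (auto simp: Pi_iff smult_l_distr)
  also have "\<dots> = lin_comb M n c g \<oplus>\<^bsub>M\<^esub> lin_comb M n d g"
    unfolding lin_comb_def using assms by (intro M.finsum_addf) (auto simp: Pi_iff)
  finally show ?thesis .
qed

lemma lc_add_gens:
  assumes "c \<in> {..<n} \<rightarrow> carrier R" "g \<in> {..<n} \<rightarrow> carrier M" "h \<in> {..<n} \<rightarrow> carrier M"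
  shows "lin_comb M n c (\<lambda>i. g i \<oplus>\<^bsub>M\<^esub> h i) = lin_comb M n c g \<oplus>\<^bsub>M\<^esub> lin_comb M n c h"
proof -
  have "lin_comb M n c (\<lambda>i. g i \<oplus>\<^bsub>M\<^esub> h i) = finsum M (\<lambda>i. c i \<odot>\<^bsub>M\<^esub> g i \<oplus>\<^bsub>M\<^esub> c i \<odot>\<^bsub>M\<^esub> h i) {..<n}"
    unfolding lin_comb_def using assms by (intro M.finsum_cong') (auto simp: Pi_iff smult_r_distr)
  also have "\<dots> = lin_comb M n c g \<oplus>\<^bsub>M\<^esub> lin_comb M n c h"
    unfolding lin_comb_def using assms by (intro M.finsum_addf) (auto simp: Pi_iff)
  finally show ?thesis .
qed

lemma lc_smult_coeff:
  assumes "a \<in> carrier R" "c \<in> {..<n} \<rightarrow> carrier R" "g \<in> {..<n} \<rightarrow> carrier M"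
  shows "lin_comb M n (\<lambda>i. a \<otimes>\<^bsub>R\<^esub> c i) g = a \<odot>\<^bsub>M\<^esub> lin_comb M n c g"
  using assms
proof (induction n)
  case 0 then show ?case by simp
next
  case (Suc n)
  have c: "c \<in> {..<n} \<rightarrow> carrier R" and g: "g \<in> {..<n} \<rightarrow> carrier M" using Suc.prems by auto
  have "lin_comb M (Suc n) (\<lambda>i. a \<otimes>\<^bsub>R\<^esub> c i) g = lin_comb M n (\<lambda>i. a \<otimes>\<^bsub>R\<^esub> c i) g \<oplus>\<^bsub>M\<^esub> (a \<otimes>\<^bsub>R\<^esub> c n) \<odot>\<^bsub>M\<^esub> g n"
    using Suc.prems by (intro lc_Suc) auto
  also have "\<dots> = a \<odot>\<^bsub>M\<^esub> lin_comb M n c g \<oplus>\<^bsub>M\<^esub> a \<odot>\<^bsub>M\<^esub> (c n \<odot>\<^bsub>M\<^esub> g n)"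
    using Suc c g by (simp add: smult_assoc1 Pi_iff)
  also have "\<dots> = a \<odot>\<^bsub>M\<^esub> (lin_comb M n c g \<oplus>\<^bsub>M\<^esub> c n \<odot>\<^bsub>M\<^esub> g n)"
    using Suc.prems c g by (intro smult_r_distr[symmetric]) (auto simp: Pi_iff)
  also have "\<dots> = a \<odot>\<^bsub>M\<^esub> lin_comb M (Suc n) c g"
    using Suc.prems by (simp add: lc_Suc)
  finally show ?case .
qed

lemma lc_append:
  assumes "c \<in> {..<n+m} \<rightarrow> carrier R" "g \<in> {..<n+m} \<rightarrow> carrier M"
  shows "lin_comb M (n+m) c g = lin_comb M n c g \<oplus>\<^bsub>M\<^esub> lin_comb M m (\<lambda>i. c (n+i)) (\<lambda>i. g (n+i))"
  using assms
proof (induction m)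
  case 0 then show ?case by (simp add: lc_closed)
next
  case (Suc m)
  have c: "c \<in> {..<n+m} \<rightarrow> carrier R" and g: "g \<in> {..<n+m} \<rightarrow> carrier M" using Suc.prems by auto
  have c1: "c \<in> {..<n} \<rightarrow> carrier R" and g1: "g \<in> {..<n} \<rightarrow> carrier M" using Suc.prems by auto
  have c2: "(\<lambda>i. c (n+i)) \<in> {..<Suc m} \<rightarrow> carrier R" and g2: "(\<lambda>i. g (n+i)) \<in> {..<Suc m} \<rightarrow> carrier M"
    using Suc.prems by auto
  have "lin_comb M (n + Suc m) c g = lin_comb M (n+m) c g \<oplus>\<^bsub>M\<^esub> c (n+m) \<odot>\<^bsub>M\<^esub> g (n+m)"
    using Suc.prems by (simp add: lc_Suc)
  also have "\<dots> = (lin_comb M n c g \<oplus>\<^bsub>M\<^esub> lin_comb M m (\<lambda>i. c (n+i)) (\<lambda>i. g (n+i))) \<oplus>\<^bsub>M\<^esub> c (n+m) \<odot>\<^bsub>M\<^esub> g (n+m)"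
    using Suc.IH[OF c g] by simp
  also have "\<dots> = lin_comb M n c g \<oplus>\<^bsub>M\<^esub> (lin_comb M m (\<lambda>i. c (n+i)) (\<lambda>i. g (n+i)) \<oplus>\<^bsub>M\<^esub> c (n+m) \<odot>\<^bsub>M\<^esub> g (n+m))"
    using c1 g1 c2 g2 Suc.prems by (intro M.a_assoc) (auto intro!: lc_closed simp: Pi_iff)
  also have "\<dots> = lin_comb M n c g \<oplus>\<^bsub>M\<^esub> lin_comb M (Suc m) (\<lambda>i. c (n+i)) (\<lambda>i. g (n+i))"
    using c2 g2 by (simp add: lc_Suc)
  finally show ?case .
qed

lemma lc_unit:
  assumes "j < n" "g \<in> {..<n} \<rightarrow> carrier M"
  shows "lin_comb M n (\<lambda>i. if i = j then \<one>\<^bsub>R\<^esub> else \<zero>\<^bsub>R\<^esub>) g = g j"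
proof -
  have "lin_comb M n (\<lambda>i. if i = j then \<one>\<^bsub>R\<^esub> else \<zero>\<^bsub>R\<^esub>) g = finsum M (\<lambda>i. if i = j then g j else \<zero>\<^bsub>M\<^esub>) {..<n}"
    unfolding lin_comb_def using assms by (intro M.finsum_cong') (auto simp: Pi_iff)
  also have "\<dots> = g j" using assms by (intro M.add.finprod_singleton_swap) (auto simp: Pi_iff)
  finally show ?thesis .
qed

end

lemma linmapD:
  assumes "linmap R M N \<phi>"
  shows "\<And>x. x \<in> carrier M \<Longrightarrow> \<phi> x \<in> carrier N"
    and "\<And>x y. x \<in> carrier M \<Longrightarrow> y \<in> carrier M \<Longrightarrow> \<phi> (x \<oplus>\<^bsub>M\<^esub> y) = \<phi> x \<oplus>\<^bsub>N\<^esub> \<phi> y"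
    and "\<And>a x. a \<in> carrier R \<Longrightarrow> x \<in> carrier M \<Longrightarrow> \<phi> (a \<odot>\<^bsub>M\<^esub> x) = a \<odot>\<^bsub>N\<^esub> \<phi> x"
  using assms unfolding linmap_def by auto

lemma linmap_zero:
  fixes M :: "('a,'b) module" and N :: "('a,'c) module"
  assumes "module R M" "module R N" "linmap R M N \<phi>"
  shows "\<phi> \<zero>\<^bsub>M\<^esub> = \<zero>\<^bsub>N\<^esub>"
proof -
  interpret M: fmod R M by (simp add: fmod_def assms)
  interpret N: fmod R N by (simp add: fmod_def assms)
  have 1: "\<phi> (\<zero>\<^bsub>R\<^esub> \<odot>\<^bsub>M\<^esub> \<zero>\<^bsub>M\<^esub>) = \<zero>\<^bsub>R\<^esub> \<odot>\<^bsub>N\<^esub> \<phi> \<zero>\<^bsub>M\<^esub>"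
    by (rule linmapD(3)[OF assms(3)]) auto
  have 2: "\<phi> \<zero>\<^bsub>M\<^esub> \<in> carrier N" using linmapD(1)[OF assms(3)] by auto
  show ?thesis using 1 2 by simp
qed

lemma lc_linear:
  fixes M :: "('a,'b) module" and N :: "('a,'c) module"
  assumes "module R M" "module R N" "linmap R M N \<phi>"
    "c \<in> {..<n} \<rightarrow> carrier R" "g \<in> {..<n} \<rightarrow> carrier M"
  shows "\<phi> (lin_comb M n c g) = lin_comb N n c (\<lambda>i. \<phi> (g i))"
proof -
  interpret M: fmod R M by (simp add: fmod_def assms)
  interpret N: fmod R N by (simp add: fmod_def assms)
  show ?thesis using assms(4,5)
  proof (induction n)
    case 0 then show ?case using linmap_zero[OF assms(1-3)] by simp
  next
    case (Suc n)
    have c: "c \<in> {..<n} \<rightarrow> carrier R" and g: "g \<in> {..<n} \<rightarrow> carrier M" using Suc.prems by auto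
    have g': "(\<lambda>i. \<phi> (g i)) \<in> {..<Suc n} \<rightarrow> carrier N" using Suc.prems linmapD(1)[OF assms(3)] by auto
    show ?case
      using Suc.prems Suc.IH[OF c g] g' c g linmapD[OF assms(3)]
      by (simp add: M.lc_Suc N.lc_Suc M.lc_closed Pi_iff)
  qed
qed


context fmod
begin

lemma lc_zero_coeff:
  assumes "g \<in> {..<n} \<rightarrow> carrier M"
  shows "lin_comb M n (\<lambda>i. \<zero>\<^bsub>R\<^esub>) g = \<zero>\<^bsub>M\<^esub>"
proof -
  have "lin_comb M n (\<lambda>i. \<zero>\<^bsub>R\<^esub>) g = finsum M (\<lambda>i. \<zero>\<^bsub>M\<^esub>) {..<n}"
    unfolding lin_comb_def using assms by (intro M.finsum_cong') (auto simp: Pi_iff)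
  then show ?thesis by simp
qed

lemma span_sub: "g \<in> {..<n} \<rightarrow> carrier M \<Longrightarrow> span_gens R M n g \<subseteq> carrier M"
  unfolding span_gens_def by auto

lemma span_gen_mem:
  assumes "j < n" "g \<in> {..<n} \<rightarrow> carrier M"
  shows "g j \<in> span_gens R M n g"
  unfolding span_gens_def using assms lc_unit[OF assms]
  by (intro CollectI exI[of _ "\<lambda>i. if i = j then \<one>\<^bsub>R\<^esub> else \<zero>\<^bsub>R\<^esub>"]) auto

lemma span_zero: "g \<in> {..<n} \<rightarrow> carrier M \<Longrightarrow> \<zero>\<^bsub>M\<^esub> \<in> span_gens R M n g"
  unfolding span_gens_def using lc_zero_coeff
  by (intro CollectI exI[of _ "\<lambda>i. \<zero>\<^bsub>R\<^esub>"]) auto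

lemma span_add:
  assumes "x \<in> span_gens R M n g" "y \<in> span_gens R M n g" "g \<in> {..<n} \<rightarrow> carrier M"
  shows "x \<oplus>\<^bsub>M\<^esub> y \<in> span_gens R M n g"
proof -
  obtain c d where c: "c \<in> {..<n} \<rightarrow> carrier R" "x = lin_comb M n c g"
    and d: "d \<in> {..<n} \<rightarrow> carrier R" "y = lin_comb M n d g"
    using assms unfolding span_gens_def by auto
  show ?thesis unfolding span_gens_def
    using c d assms(3) lc_add_coeff[of c n d g]
    by (intro CollectI exI[of _ "\<lambda>i. c i \<oplus>\<^bsub>R\<^esub> d i"]) auto
qed

lemma span_smult:
  assumes "x \<in> span_gens R M n g" "a \<in> carrier R" "g \<in> {..<n} \<rightarrow> carrier M"
  shows "a \<odot>\<^bsub>M\<^esub> x \<in> span_gens R M n g"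
proof -
  obtain c where c: "c \<in> {..<n} \<rightarrow> carrier R" "x = lin_comb M n c g"
    using assms unfolding span_gens_def by auto
  show ?thesis unfolding span_gens_def
    using c assms lc_smult_coeff[of a c n g]
    by (intro CollectI exI[of _ "\<lambda>i. a \<otimes>\<^bsub>R\<^esub> c i"]) auto
qed

lemma span_neg:
  assumes "x \<in> span_gens R M n g" "g \<in> {..<n} \<rightarrow> carrier M"
  shows "\<ominus>\<^bsub>M\<^esub> x \<in> span_gens R M n g"
proof -
  have "x \<in> carrier M" using assms span_sub by auto
  then have "\<ominus>\<^bsub>M\<^esub> x = (\<ominus>\<^bsub>R\<^esub> \<one>\<^bsub>R\<^esub>) \<odot>\<^bsub>M\<^esub> x" by (simp add: smult_l_minus)
  then show ?thesis using span_smult[OF assms(1) _ assms(2)] by simp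
qed

lemma span_submodule:
  assumes "g \<in> {..<n} \<rightarrow> carrier M"
  shows "submodule (span_gens R M n g) R M"
proof (rule submoduleI)
  show "span_gens R M n g \<subseteq> carrier M" by (rule span_sub[OF assms])
  show "\<zero>\<^bsub>M\<^esub> \<in> span_gens R M n g" by (rule span_zero[OF assms])
  show "\<And>a. a \<in> span_gens R M n g \<Longrightarrow> \<ominus>\<^bsub>M\<^esub> a \<in> span_gens R M n g" by (rule span_neg[OF _ assms])
  show "\<And>a b. a \<in> span_gens R M n g \<Longrightarrow> b \<in> span_gens R M n g \<Longrightarrow> a \<oplus>\<^bsub>M\<^esub> b \<in> span_gens R M n g"
    by (rule span_add[OF _ _ assms])
  show "\<And>a x. a \<in> carrier R \<Longrightarrow> x \<in> span_gens R M n g \<Longrightarrow> a \<odot>\<^bsub>M\<^esub> x \<in> span_gens R M n g"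
    by (rule span_smult[OF _ _ assms])
qed

lemma span_least:
  assumes "submodule H R M" "g \<in> {..<n} \<rightarrow> H"
  shows "span_gens R M n g \<subseteq> H"
proof
  fix x assume "x \<in> span_gens R M n g"
  then obtain c where c: "c \<in> {..<n} \<rightarrow> carrier R" "x = lin_comb M n c g"
    unfolding span_gens_def by auto
  have HM: "H \<subseteq> carrier M" using submoduleE(1)[OF assms(1)] .
  have "\<And>k. k \<le> n \<Longrightarrow> lin_comb M k c g \<in> H"
  proof -
    fix k show "k \<le> n \<Longrightarrow> lin_comb M k c g \<in> H"
    proof (induction k)
      case 0 then show ?case using submoduleE(2)[OF assms(1)] subgroup.one_closed[OF submodule.axioms(1)[OF assms(1)]]
        by simp
    next
      case (Suc k)
      have gk: "g \<in> {..<Suc k} \<rightarrow> carrier M" "c \<in> {..<Suc k} \<rightarrow> carrier R"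
        using Suc.prems assms(2) HM c by (auto simp: Pi_iff)
      have "lin_comb M (Suc k) c g = lin_comb M k c g \<oplus>\<^bsub>M\<^esub> c k \<odot>\<^bsub>M\<^esub> g k"
        by (rule lc_Suc[OF gk(2) gk(1)])
      moreover have "c k \<odot>\<^bsub>M\<^esub> g k \<in> H"
        using Suc.prems assms(2) c by (intro submoduleE(4)[OF assms(1)]) (auto simp: Pi_iff)
      moreover have "lin_comb M k c g \<in> H" using Suc by simp
      ultimately show ?case using submoduleE(5)[OF assms(1)] by simp
    qed
  qed
  then show "x \<in> H" using c by auto
qed

lemma span_append:
  assumes "x \<in> span_gens R M n g" "y \<in> span_gens R M m h"
    "g \<in> {..<n} \<rightarrow> carrier M" "h \<in> {..<m} \<rightarrow> carrier M"
  shows "x \<oplus>\<^bsub>M\<^esub> y \<in> span_gens R M (n+m) (\<lambda>k. if k < n then g k else h (k - n))"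
proof -
  obtain c where c: "c \<in> {..<n} \<rightarrow> carrier R" "x = lin_comb M n c g"
    using assms unfolding span_gens_def by auto
  obtain d where d: "d \<in> {..<m} \<rightarrow> carrier R" "y = lin_comb M m d h"
    using assms unfolding span_gens_def by auto
  let ?G = "\<lambda>k. if k < n then g k else h (k - n)"
  let ?C = "\<lambda>k. if k < n then c k else d (k - n)"
  have C: "?C \<in> {..<n+m} \<rightarrow> carrier R" using c d by (auto simp: Pi_iff)
  have G: "?G \<in> {..<n+m} \<rightarrow> carrier M" using assms by (auto simp: Pi_iff)
  have "lin_comb M (n+m) ?C ?G = lin_comb M n ?C ?G \<oplus>\<^bsub>M\<^esub> lin_comb M m (\<lambda>i. ?C (n+i)) (\<lambda>i. ?G (n+i))"
    by (rule lc_append[OF C G])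
  also have "lin_comb M n ?C ?G = x" using c assms by (auto intro!: lc_cong)
  also have "lin_comb M m (\<lambda>i. ?C (n+i)) (\<lambda>i. ?G (n+i)) = y" using d assms by (auto intro!: lc_cong)
  finally have "x \<oplus>\<^bsub>M\<^esub> y = lin_comb M (n+m) ?C ?G" by simp
  then show ?thesis unfolding span_gens_def using C by blast
qed

lemma fin_genI:
  assumes "submodule N R M" "g \<in> {..<n} \<rightarrow> N" "N \<subseteq> span_gens R M n g"
  shows "fin_gen R M N"
  unfolding fin_gen_def using assms span_least[OF assms(1,2)] by blast

lemma fin_genE:
  assumes "fin_gen R M N" "N \<subseteq> carrier M"
  obtains n g where "g \<in> {..<n} \<rightarrow> N" "N = span_gens R M n g" "g \<in> {..<n} \<rightarrow> carrier M"
  using assms unfolding fin_gen_def by blast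

lemma fin_gen_submodule:
  assumes "fin_gen R M N" "N \<subseteq> carrier M"
  shows "submodule N R M"
proof -
  obtain n g where "g \<in> {..<n} \<rightarrow> N" "N = span_gens R M n g" "g \<in> {..<n} \<rightarrow> carrier M"
    using fin_genE[OF assms] .
  then show ?thesis using span_submodule by simp
qed

lemma fin_gen_add:
  assumes "fin_gen R M N1" "N1 \<subseteq> carrier M" "fin_gen R M N2" "N2 \<subseteq> carrier M"
    "N \<subseteq> carrier M" "submodule N R M" "N1 \<subseteq> N" "N2 \<subseteq> N"
    "\<And>x. x \<in> N \<Longrightarrow> \<exists>y\<in>N1. \<exists>z\<in>N2. x = y \<oplus>\<^bsub>M\<^esub> z"
  shows "fin_gen R M N"
proof -
  obtain n g where g: "g \<in> {..<n} \<rightarrow> N1" "N1 = span_gens R M n g" "g \<in> {..<n} \<rightarrow> carrier M"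
    using fin_genE[OF assms(1,2)] .
  obtain m h where h: "h \<in> {..<m} \<rightarrow> N2" "N2 = span_gens R M m h" "h \<in> {..<m} \<rightarrow> carrier M"
    using fin_genE[OF assms(3,4)] .
  show ?thesis
  proof (rule fin_genI[OF assms(6)])
    show "(\<lambda>k. if k < n then g k else h (k - n)) \<in> {..<n+m} \<rightarrow> N"
      using g h assms(7,8) by (auto simp: Pi_iff)
    show "N \<subseteq> span_gens R M (n + m) (\<lambda>k. if k < n then g k else h (k - n))"
    proof
      fix x assume "x \<in> N"
      then obtain y z where "y \<in> N1" "z \<in> N2" "x = y \<oplus>\<^bsub>M\<^esub> z" using assms(9) by blast
      then show "x \<in> span_gens R M (n + m) (\<lambda>k. if k < n then g k else h (k - n))"
        using span_append[of y n g z m h] g h by simp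
    qed
  qed
qed

end

section \<open>Restriction to a submodule\<close>

lemma fmod_restrict:
  assumes "fmod R M" "submodule H R M"
  shows "fmod R (M\<lparr>carrier := H\<rparr>)"
  using submodule.submodule_is_module[OF assms(2)] assms(1) unfolding fmod_def by simp

lemma lc_restrict:
  assumes "fmod R M" "submodule H R M" "g \<in> {..<n} \<rightarrow> H" "c \<in> {..<n} \<rightarrow> carrier R"
  shows "lin_comb (M\<lparr>carrier := H\<rparr>) n c g = lin_comb M n c g"
proof -
  interpret M: fmod R M by fact
  interpret H: fmod R "M\<lparr>carrier := H\<rparr>" by (rule fmod_restrict[OF assms(1,2)])
  have HM: "H \<subseteq> carrier M" using M.submoduleE(1)[OF assms(2)] .
  show ?thesis using assms(3,4)
  proof (induction n)
    case 0 then show ?case by simp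
  next
    case (Suc n)
    have g1: "g \<in> {..<Suc n} \<rightarrow> carrier (M\<lparr>carrier := H\<rparr>)" using Suc.prems by simp
    have g2: "g \<in> {..<Suc n} \<rightarrow> carrier M" using Suc.prems HM by auto
    have IH: "lin_comb (M\<lparr>carrier := H\<rparr>) n c g = lin_comb M n c g" by (rule Suc.IH) (use Suc.prems in auto)
    show ?case unfolding H.lc_Suc[OF Suc.prems(2) g1] M.lc_Suc[OF Suc.prems(2) g2] IH by simp
  qed
qed

lemma span_restrict:
  assumes "fmod R M" "submodule H R M" "g \<in> {..<n} \<rightarrow> H"
  shows "span_gens R (M\<lparr>carrier := H\<rparr>) n g = span_gens R M n g"
proof -
  have *: "\<And>c. c \<in> {..<n} \<rightarrow> carrier R \<Longrightarrow> lin_comb (M\<lparr>carrier := H\<rparr>) n c g = lin_comb M n c g"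
    by (rule lc_restrict[OF assms])
  show ?thesis unfolding span_gens_def
  proof (rule equalityI; rule subsetI)
    fix x assume "x \<in> {lin_comb (M\<lparr>carrier := H\<rparr>) n c g |c. c \<in> {..<n} \<rightarrow> carrier R}"
    then obtain c where c: "x = lin_comb (M\<lparr>carrier := H\<rparr>) n c g" "c \<in> {..<n} \<rightarrow> carrier R" by blast
    then have "x = lin_comb M n c g" using * by simp
    then show "x \<in> {lin_comb M n c g |c. c \<in> {..<n} \<rightarrow> carrier R}" using c(2) by blast
  next
    fix x assume "x \<in> {lin_comb M n c g |c. c \<in> {..<n} \<rightarrow> carrier R}"
    then obtain c where c: "x = lin_comb M n c g" "c \<in> {..<n} \<rightarrow> carrier R" by blast
    then have "x = lin_comb (M\<lparr>carrier := H\<rparr>) n c g" using * by simp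
    then show "x \<in> {lin_comb (M\<lparr>carrier := H\<rparr>) n c g |c. c \<in> {..<n} \<rightarrow> carrier R}" using c(2) by blast
  qed
qed

lemma fin_gen_restrict:
  assumes "fmod R M" "submodule H R M" "N \<subseteq> H"
  shows "fin_gen R (M\<lparr>carrier := H\<rparr>) N \<longleftrightarrow> fin_gen R M N"
proof
  assume "fin_gen R (M\<lparr>carrier := H\<rparr>) N"
  then obtain n g where g: "g \<in> {..<n} \<rightarrow> N" "N = span_gens R (M\<lparr>carrier := H\<rparr>) n g"
    unfolding fin_gen_def by blast
  have "g \<in> {..<n} \<rightarrow> H" using g assms(3) by auto
  then have "N = span_gens R M n g" using g span_restrict[OF assms(1,2)] by simp
  then show "fin_gen R M N" unfolding fin_gen_def using g by blast
next
  assume "fin_gen R M N"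
  then obtain n g where g: "g \<in> {..<n} \<rightarrow> N" "N = span_gens R M n g"
    unfolding fin_gen_def by blast
  have "g \<in> {..<n} \<rightarrow> H" using g assms(3) by auto
  then have "N = span_gens R (M\<lparr>carrier := H\<rparr>) n g" using g span_restrict[OF assms(1,2)] by simp
  then show "fin_gen R (M\<lparr>carrier := H\<rparr>) N" unfolding fin_gen_def using g by blast
qed

lemma relations_restrict:
  assumes "fmod R M" "submodule H R M" "g \<in> {..<n} \<rightarrow> H"
  shows "relations R (M\<lparr>carrier := H\<rparr>) n g = relations R M n g"
proof -
  have *: "\<And>c. c \<in> {..<n} \<rightarrow>\<^sub>E carrier R \<Longrightarrow> lin_comb (M\<lparr>carrier := H\<rparr>) n c g = lin_comb M n c g"
    using lc_restrict[OF assms(1,2,3)] by (simp add: PiE_def)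
  show ?thesis unfolding relations_def
  proof (rule equalityI; rule subsetI)
    fix x assume "x \<in> {c \<in> {..<n} \<rightarrow>\<^sub>E carrier R. lin_comb (M\<lparr>carrier := H\<rparr>) n c g = \<zero>\<^bsub>M\<lparr>carrier := H\<rparr>\<^esub>}"
    then show "x \<in> {c \<in> {..<n} \<rightarrow>\<^sub>E carrier R. lin_comb M n c g = \<zero>\<^bsub>M\<^esub>}" using *[of x] by simp
  next
    fix x assume "x \<in> {c \<in> {..<n} \<rightarrow>\<^sub>E carrier R. lin_comb M n c g = \<zero>\<^bsub>M\<^esub>}"
    then show "x \<in> {c \<in> {..<n} \<rightarrow>\<^sub>E carrier R. lin_comb (M\<lparr>carrier := H\<rparr>) n c g = \<zero>\<^bsub>M\<lparr>carrier := H\<rparr>\<^esub>}" using *[of x] by simp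
  qed
qed


lemma finsum_same:
  "carrier M = carrier N \<Longrightarrow> ring.add M = ring.add N \<Longrightarrow> ring.zero M = ring.zero N \<Longrightarrow> finsum M f A = finsum N f A"
  by (simp add: finsum_def finprod_def)

section \<open>Free modules\<close>

lemma free_carrier[simp]: "carrier (free_module R n) = {..<n} \<rightarrow>\<^sub>E carrier R"
  and free_add[simp]: "x \<oplus>\<^bsub>free_module R n\<^esub> y = (\<lambda>i\<in>{..<n}. x i \<oplus>\<^bsub>R\<^esub> y i)"
  and free_zero[simp]: "\<zero>\<^bsub>free_module R n\<^esub> = (\<lambda>i\<in>{..<n}. \<zero>\<^bsub>R\<^esub>)"
  and free_smult[simp]: "a \<odot>\<^bsub>free_module R n\<^esub> x = (\<lambda>i\<in>{..<n}. a \<otimes>\<^bsub>R\<^esub> x i)"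
  by (simp_all add: free_module_def)

lemma fmod_free:
  assumes "cring R"
  shows "fmod R (free_module R n)"
proof -
  interpret R: cring R by fact
  have ag: "abelian_group (free_module R n)"
  proof (rule abelian_groupI)
    fix x y z assume x: "x \<in> carrier (free_module R n)" and y: "y \<in> carrier (free_module R n)"
      and z: "z \<in> carrier (free_module R n)"
    show "x \<oplus>\<^bsub>free_module R n\<^esub> y \<in> carrier (free_module R n)" using x y by auto
    show "x \<oplus>\<^bsub>free_module R n\<^esub> y \<oplus>\<^bsub>free_module R n\<^esub> z = x \<oplus>\<^bsub>free_module R n\<^esub> (y \<oplus>\<^bsub>free_module R n\<^esub> z)"
      using x y z by (auto simp: PiE_iff R.a_assoc)
    show "x \<oplus>\<^bsub>free_module R n\<^esub> y = y \<oplus>\<^bsub>free_module R n\<^esub> x"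
      using x y by (auto simp: PiE_iff R.a_comm)
    show "\<zero>\<^bsub>free_module R n\<^esub> \<oplus>\<^bsub>free_module R n\<^esub> x = x"
      using x by (auto simp: PiE_iff extensional_def)
    show "\<exists>y\<in>carrier (free_module R n). y \<oplus>\<^bsub>free_module R n\<^esub> x = \<zero>\<^bsub>free_module R n\<^esub>"
      using x by (intro bexI[of _ "\<lambda>i\<in>{..<n}. \<ominus>\<^bsub>R\<^esub> x i"]) (auto simp: PiE_iff R.l_neg)
  next
    show "\<zero>\<^bsub>free_module R n\<^esub> \<in> carrier (free_module R n)" by auto
  qed
  have "module R (free_module R n)"
    using ag
  proof (rule moduleI[OF assms])
    fix a b x y assume a: "a \<in> carrier R" and b: "b \<in> carrier R" and x: "x \<in> carrier (free_module R n)"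
      and y: "y \<in> carrier (free_module R n)"
    show "a \<odot>\<^bsub>free_module R n\<^esub> x \<in> carrier (free_module R n)" using a x by auto
    show "(a \<oplus>\<^bsub>R\<^esub> b) \<odot>\<^bsub>free_module R n\<^esub> x = a \<odot>\<^bsub>free_module R n\<^esub> x \<oplus>\<^bsub>free_module R n\<^esub> b \<odot>\<^bsub>free_module R n\<^esub> x"
      using a b x by (auto simp: PiE_iff R.l_distr)
    show "a \<odot>\<^bsub>free_module R n\<^esub> (x \<oplus>\<^bsub>free_module R n\<^esub> y) = a \<odot>\<^bsub>free_module R n\<^esub> x \<oplus>\<^bsub>free_module R n\<^esub> a \<odot>\<^bsub>free_module R n\<^esub> y"
      using a x y by (auto simp: PiE_iff R.r_distr)
    show "(a \<otimes>\<^bsub>R\<^esub> b) \<odot>\<^bsub>free_module R n\<^esub> x = a \<odot>\<^bsub>free_module R n\<^esub> (b \<odot>\<^bsub>free_module R n\<^esub> x)"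
      using a b x by (auto simp: PiE_iff R.m_assoc)
  next
    fix x assume x: "x \<in> carrier (free_module R n)"
    show "\<one>\<^bsub>R\<^esub> \<odot>\<^bsub>free_module R n\<^esub> x = x" using x by (auto simp: PiE_iff extensional_def)
  qed
  then show ?thesis by (simp add: fmod_def)
qed

definition basis :: "('a,'n) ring_scheme \<Rightarrow> nat \<Rightarrow> nat \<Rightarrow> nat \<Rightarrow> 'a" where
  "basis R n j = (\<lambda>i\<in>{..<n}. if i = j then \<one>\<^bsub>R\<^esub> else \<zero>\<^bsub>R\<^esub>)"

lemma basis_carrier: "cring R \<Longrightarrow> basis R n j \<in> carrier (free_module R n)"
proof -
  assume "cring R"
  then interpret R: cring R .
  show ?thesis unfolding basis_def by auto
qed

lemma free_lc_basis:
  assumes "cring R" "x \<in> carrier (free_module R n)"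
  shows "lin_comb (free_module R n) n x (basis R n) = x"
proof -
  interpret R: cring R by fact
  interpret F: fmod R "free_module R n" by (rule fmod_free[OF assms(1)])
  have xc: "x \<in> {..<n} \<rightarrow> carrier R" using assms(2) by auto
  have bc: "basis R n \<in> {..<n} \<rightarrow> carrier (free_module R n)" using basis_carrier[OF assms(1)] by auto
  have "k \<le> n \<Longrightarrow> lin_comb (free_module R n) k x (basis R n) = (\<lambda>i\<in>{..<n}. if i < k then x i else \<zero>\<^bsub>R\<^esub>)" for k
  proof (induction k)
    case 0 then show ?case by simp
  next
    case (Suc k)
    have "lin_comb (free_module R n) (Suc k) x (basis R n) =
          lin_comb (free_module R n) k x (basis R n) \<oplus>\<^bsub>free_module R n\<^esub> x k \<odot>\<^bsub>free_module R n\<^esub> basis R n k"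
      using xc bc Suc.prems by (intro F.lc_Suc) auto
    also have "\<dots> = (\<lambda>i\<in>{..<n}. if i < Suc k then x i else \<zero>\<^bsub>R\<^esub>)"
    proof -
      have IH: "lin_comb (free_module R n) k x (basis R n) = (\<lambda>i\<in>{..<n}. if i < k then x i else \<zero>\<^bsub>R\<^esub>)"
        using Suc by (simp add: restrict_def)
      have xk: "x k \<in> carrier R" using xc Suc.prems by auto
      have xi: "\<And>i. i < n \<Longrightarrow> x i \<in> carrier R" using xc by auto
      show ?thesis unfolding IH by (rule ext) (auto simp: basis_def xk xi less_Suc_eq)
    qed
    finally show ?case .
  qed
  from this[of n] have "lin_comb (free_module R n) n x (basis R n) = (\<lambda>i\<in>{..<n}. x i)"
    by (simp cong: restrict_cong)
  also have "\<dots> = x" using assms(2) by (auto simp: PiE_iff extensional_def)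
  finally show ?thesis .
qed

lemma free_fin_gen:
  assumes "cring R"
  shows "fin_gen R (free_module R n) (carrier (free_module R n))"
proof -
  interpret F: fmod R "free_module R n" by (rule fmod_free[OF assms(1)])
  have bc: "basis R n \<in> {..<n} \<rightarrow> carrier (free_module R n)" using basis_carrier[OF assms(1)] by auto
  show ?thesis
  proof (rule F.fin_genI[OF F.carrier_is_submodule bc])
    show "carrier (free_module R n) \<subseteq> span_gens R (free_module R n) n (basis R n)"
    proof
      fix x assume x: "x \<in> carrier (free_module R n)"
      then have "x = lin_comb (free_module R n) n x (basis R n)" using free_lc_basis[OF assms] by simp
      moreover have "x \<in> {..<n} \<rightarrow> carrier R" using x by auto
      ultimately show "x \<in> span_gens R (free_module R n) n (basis R n)" unfolding span_gens_def by blast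
    qed
  qed
qed

lemma lcmap_linear:
  assumes "fmod R M" "g \<in> {..<n} \<rightarrow> carrier M"
  shows "linmap R (free_module R n) M (\<lambda>c. lin_comb M n c g)"
proof -
  interpret M: fmod R M by fact
  show ?thesis unfolding linmap_def
  proof (intro conjI ballI)
    show "(\<lambda>c. lin_comb M n c g) \<in> carrier (free_module R n) \<rightarrow> carrier M"
      using assms(2) by (auto intro!: M.lc_closed)
  next
    fix x y assume x: "x \<in> carrier (free_module R n)" and y: "y \<in> carrier (free_module R n)"
    have "lin_comb M n (x \<oplus>\<^bsub>free_module R n\<^esub> y) g = lin_comb M n (\<lambda>i. x i \<oplus>\<^bsub>R\<^esub> y i) g"
      using x y assms(2) by (intro M.lc_cong) auto
    also have "\<dots> = lin_comb M n x g \<oplus>\<^bsub>M\<^esub> lin_comb M n y g"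
      using x y assms(2) by (intro M.lc_add_coeff) auto
    finally show "lin_comb M n (x \<oplus>\<^bsub>free_module R n\<^esub> y) g = lin_comb M n x g \<oplus>\<^bsub>M\<^esub> lin_comb M n y g" .
  next
    fix a x assume a: "a \<in> carrier R" and x: "x \<in> carrier (free_module R n)"
    have "lin_comb M n (a \<odot>\<^bsub>free_module R n\<^esub> x) g = lin_comb M n (\<lambda>i. a \<otimes>\<^bsub>R\<^esub> x i) g"
      using a x assms(2) by (intro M.lc_cong) auto
    also have "\<dots> = a \<odot>\<^bsub>M\<^esub> lin_comb M n x g"
      using a x assms(2) by (intro M.lc_smult_coeff) auto
    finally show "lin_comb M n (a \<odot>\<^bsub>free_module R n\<^esub> x) g = a \<odot>\<^bsub>M\<^esub> lin_comb M n x g" .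
  qed
qed

lemma ring_module_simps[simp]:
  "carrier (ring_module R) = carrier R"
  "x \<oplus>\<^bsub>ring_module R\<^esub> y = x \<oplus>\<^bsub>R\<^esub> y"
  "\<zero>\<^bsub>ring_module R\<^esub> = \<zero>\<^bsub>R\<^esub>"
  "a \<odot>\<^bsub>ring_module R\<^esub> x = a \<otimes>\<^bsub>R\<^esub> x"
  "x \<otimes>\<^bsub>ring_module R\<^esub> y = x \<otimes>\<^bsub>R\<^esub> y"
  "\<one>\<^bsub>ring_module R\<^esub> = \<one>\<^bsub>R\<^esub>"
  by (simp_all add: ring_module_def)

lemma fmod_ring_module:
  assumes "cring R"
  shows "fmod R (ring_module R)"
proof -
  interpret R: cring R by fact
  have ag: "abelian_group (ring_module R)"
    by (rule abelian_groupI) (auto simp: R.a_ac intro: R.l_neg)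
  have "module R (ring_module R)"
    by (rule moduleI[OF assms ag]) (auto simp: R.l_distr R.r_distr R.m_assoc)
  then show ?thesis by (simp add: fmod_def)
qed

lemma ring_module_lc:
  "lin_comb (ring_module R) n c g = finsum R (\<lambda>i. c i \<otimes>\<^bsub>R\<^esub> g i) {..<n}"
  unfolding lin_comb_def ring_module_simps(4) by (rule finsum_same) (simp_all add: ring_module_def)

lemma ring_module_a_inv[simp]: "a_inv (ring_module R) x = a_inv R x"
  by (simp add: a_inv_def m_inv_def ring_module_def)

lemma ideal_submodule:
  assumes "cring R" "ideal I R"
  shows "submodule I R (ring_module R)"
proof -
  interpret M: fmod R "ring_module R" by (rule fmod_ring_module[OF assms(1)])
  interpret I: ideal I R by fact
  show ?thesis
    by (rule M.submoduleI) (auto simp: I.a_subset I.I_l_closed I.a_inv_closed a_inv_def[symmetric] )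
qed

section \<open>Restriction of scalars\<close>

definition rscal :: "('a \<Rightarrow> 'b) \<Rightarrow> ('b, 'm) module \<Rightarrow> ('a, 'm) module" where
  "rscal h M = \<lparr>carrier = carrier M, monoid.mult = monoid.mult M, monoid.one = monoid.one M, ring.zero = ring.zero M,
                ring.add = ring.add M, smult = (\<lambda>a x. h a \<odot>\<^bsub>M\<^esub> x)\<rparr>"

lemma rscal_simps[simp]:
  "carrier (rscal h M) = carrier M"
  "x \<oplus>\<^bsub>rscal h M\<^esub> y = x \<oplus>\<^bsub>M\<^esub> y"
  "\<zero>\<^bsub>rscal h M\<^esub> = \<zero>\<^bsub>M\<^esub>"
  "a \<odot>\<^bsub>rscal h M\<^esub> x = h a \<odot>\<^bsub>M\<^esub> x"
  by (simp_all add: rscal_def)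

lemma rscal_restrict: "(rscal h M)\<lparr>carrier := H\<rparr> = rscal h (M\<lparr>carrier := H\<rparr>)"
  by (simp add: rscal_def)

lemma rscal_lc: "lin_comb (rscal h M) n c g = lin_comb M n (\<lambda>i. h (c i)) g"
  unfolding lin_comb_def rscal_simps(4) by (rule finsum_same) (simp_all add: rscal_def)

lemma fmod_rscal:
  assumes "fmod S M" "cring A" "h \<in> ring_hom A S"
  shows "fmod A (rscal h M)"
proof -
  interpret M: fmod S M by fact
  interpret A: cring A by fact
  have hc: "\<And>a. a \<in> carrier A \<Longrightarrow> h a \<in> carrier S" using assms(3) by (auto simp: ring_hom_def)
  have ag: "abelian_group (rscal h M)"
    by (rule abelian_groupI) (auto simp: M.a_ac intro: M.l_neg)
  have "module A (rscal h M)"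
    by (rule moduleI[OF assms(2) ag])
       (auto simp: hc M.smult_l_distr M.smult_r_distr M.smult_assoc1 ring_hom_add[OF assms(3)] ring_hom_mult[OF assms(3)] ring_hom_one[OF assms(3)])
  then show ?thesis by (simp add: fmod_def)
qed

lemma span_rscal_sub:
  assumes "fmod S M" "h \<in> ring_hom A S" "g \<in> {..<n} \<rightarrow> carrier M"
  shows "span_gens A (rscal h M) n g \<subseteq> span_gens S M n g"
proof
  fix x assume "x \<in> span_gens A (rscal h M) n g"
  then obtain c where c: "c \<in> {..<n} \<rightarrow> carrier A" "x = lin_comb M n (\<lambda>i. h (c i)) g"
    unfolding span_gens_def rscal_lc by blast
  have "(\<lambda>i. h (c i)) \<in> {..<n} \<rightarrow> carrier S" using c assms(2) by (auto simp: ring_hom_def)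
  then show "x \<in> span_gens S M n g" using c unfolding span_gens_def by blast
qed


lemma linmap_neg:
  fixes M :: "('a,'b) module" and N :: "('a,'c) module"
  assumes "fmod R M" "fmod R N" "linmap R M N \<phi>" "x \<in> carrier M"
  shows "\<phi> (\<ominus>\<^bsub>M\<^esub> x) = \<ominus>\<^bsub>N\<^esub> \<phi> x"
proof -
  interpret M: fmod R M by fact
  interpret N: fmod R N by fact
  have "\<phi> (\<ominus>\<^bsub>M\<^esub> x) \<oplus>\<^bsub>N\<^esub> \<phi> x = \<phi> (\<ominus>\<^bsub>M\<^esub> x \<oplus>\<^bsub>M\<^esub> x)"
    using linmapD(2)[OF assms(3)] assms(4) by simp
  also have "\<dots> = \<zero>\<^bsub>N\<^esub>" using assms(4) linmap_zero[OF M.module_axioms N.module_axioms assms(3)] by (simp add: M.l_neg)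
  finally have "\<phi> (\<ominus>\<^bsub>M\<^esub> x) \<oplus>\<^bsub>N\<^esub> \<phi> x = \<zero>\<^bsub>N\<^esub>" .
  then show ?thesis using linmapD(1)[OF assms(3)] assms(4)
    by (intro N.add.inv_equality[symmetric]) auto
qed

lemma linmap_minus:
  fixes M :: "('a,'b) module" and N :: "('a,'c) module"
  assumes "fmod R M" "fmod R N" "linmap R M N \<phi>" "x \<in> carrier M" "y \<in> carrier M"
  shows "\<phi> (x \<ominus>\<^bsub>M\<^esub> y) = \<phi> x \<ominus>\<^bsub>N\<^esub> \<phi> y"
proof -
  interpret M: fmod R M by fact
  interpret N: fmod R N by fact
  show ?thesis using assms(4,5) linmapD[OF assms(3)] linmap_neg[OF assms(1-3)]
    by (simp add: a_minus_def)
qed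

lemma kernel_submodule:
  fixes M :: "('a,'b) module" and N :: "('a,'c) module"
  assumes "fmod R M" "fmod R N" "linmap R M N \<phi>"
  shows "submodule {x \<in> carrier M. \<phi> x = \<zero>\<^bsub>N\<^esub>} R M"
proof -
  interpret M: fmod R M by fact
  interpret N: fmod R N by fact
  have z: "\<phi> \<zero>\<^bsub>M\<^esub> = \<zero>\<^bsub>N\<^esub>" by (rule linmap_zero[OF M.module_axioms N.module_axioms assms(3)])
  show ?thesis
    by (rule M.submoduleI) (auto simp: z linmap_neg[OF assms] linmapD[OF assms(3)])
qed

lemma fin_gen_image:
  fixes M :: "('a,'b) module" and M' :: "('a,'c) module"
  assumes "fmod R M" "fmod R M'" "linmap R M M' \<phi>" "g \<in> {..<n} \<rightarrow> carrier M"
  shows "\<phi> ` span_gens R M n g = span_gens R M' n (\<lambda>i. \<phi> (g i))"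
proof -
  interpret M: fmod R M by fact
  interpret M': fmod R M' by fact
  have *: "\<And>c. c \<in> {..<n} \<rightarrow> carrier R \<Longrightarrow> \<phi> (lin_comb M n c g) = lin_comb M' n c (\<lambda>i. \<phi> (g i))"
    by (rule lc_linear[OF M.module_axioms M'.module_axioms assms(3) _ assms(4)])
  show ?thesis unfolding span_gens_def
  proof (rule equalityI; rule subsetI)
    fix x assume "x \<in> \<phi> ` {lin_comb M n c g |c. c \<in> {..<n} \<rightarrow> carrier R}"
    then obtain c where c: "x = \<phi> (lin_comb M n c g)" "c \<in> {..<n} \<rightarrow> carrier R" by blast
    then have "x = lin_comb M' n c (\<lambda>i. \<phi> (g i))" using * by simp
    then show "x \<in> {lin_comb M' n c (\<lambda>i. \<phi> (g i)) |c. c \<in> {..<n} \<rightarrow> carrier R}" using c(2) by blast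
  next
    fix x assume "x \<in> {lin_comb M' n c (\<lambda>i. \<phi> (g i)) |c. c \<in> {..<n} \<rightarrow> carrier R}"
    then obtain c where c: "x = lin_comb M' n c (\<lambda>i. \<phi> (g i))" "c \<in> {..<n} \<rightarrow> carrier R" by blast
    then have "x = \<phi> (lin_comb M n c g)" using * by simp
    then show "x \<in> \<phi> ` {lin_comb M n c g |c. c \<in> {..<n} \<rightarrow> carrier R}" using c(2) by blast
  qed
qed

lemma fin_gen_image':
  fixes M :: "('a,'b) module" and M' :: "('a,'c) module"
  assumes "fmod R M" "fmod R M'" "linmap R M M' \<phi>" "fin_gen R M N" "N \<subseteq> carrier M"
  shows "fin_gen R M' (\<phi> ` N)"
proof -
  interpret M: fmod R M by fact
  obtain n g where g: "g \<in> {..<n} \<rightarrow> N" "N = span_gens R M n g" "g \<in> {..<n} \<rightarrow> carrier M"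
    using M.fin_genE[OF assms(4,5)] .
  have "\<phi> ` N = span_gens R M' n (\<lambda>i. \<phi> (g i))" using fin_gen_image[OF assms(1-3) g(3)] g(2) by simp
  moreover have "(\<lambda>i. \<phi> (g i)) \<in> {..<n} \<rightarrow> \<phi> ` N" using g(1) by auto
  ultimately show ?thesis unfolding fin_gen_def by blast
qed

lemma fin_pres_iso:
  fixes M :: "('a,'b) module" and M' :: "('a,'c) module"
  assumes "fmod R M" "fmod R M'" "linmap R M M' \<phi>" "bij_betw \<phi> (carrier M) (carrier M')" "fin_pres R M"
  shows "fin_pres R M'"
proof -
  interpret M: fmod R M by fact
  interpret M': fmod R M' by fact
  obtain n g where g: "g \<in> {..<n} \<rightarrow> carrier M" "carrier M = span_gens R M n g"
    "fin_gen R (free_module R n) (relations R M n g)"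
    using assms(5) unfolding fin_pres_def by blast
  have g': "(\<lambda>i. \<phi> (g i)) \<in> {..<n} \<rightarrow> carrier M'" using g(1) linmapD(1)[OF assms(3)] by auto
  have c: "carrier M' = span_gens R M' n (\<lambda>i. \<phi> (g i))"
    using fin_gen_image[OF assms(1-3) g(1)] g(2) assms(4) unfolding bij_betw_def by simp
  have z: "\<phi> \<zero>\<^bsub>M\<^esub> = \<zero>\<^bsub>M'\<^esub>" by (rule linmap_zero[OF M.module_axioms M'.module_axioms assms(3)])
  have "relations R M' n (\<lambda>i. \<phi> (g i)) = relations R M n g"
  proof -
    have "\<And>c. c \<in> {..<n} \<rightarrow>\<^sub>E carrier R \<Longrightarrow> (lin_comb M' n c (\<lambda>i. \<phi> (g i)) = \<zero>\<^bsub>M'\<^esub>) = (lin_comb M n c g = \<zero>\<^bsub>M\<^esub>)"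
    proof -
      fix c assume cc: "c \<in> {..<n} \<rightarrow>\<^sub>E carrier R"
      then have c': "c \<in> {..<n} \<rightarrow> carrier R" by (simp add: PiE_def)
      have e: "lin_comb M' n c (\<lambda>i. \<phi> (g i)) = \<phi> (lin_comb M n c g)"
        by (rule lc_linear[OF M.module_axioms M'.module_axioms assms(3) c' g(1), symmetric])
      have in1: "lin_comb M n c g \<in> carrier M" using c' g(1) by (rule M.lc_closed)
      show "(lin_comb M' n c (\<lambda>i. \<phi> (g i)) = \<zero>\<^bsub>M'\<^esub>) = (lin_comb M n c g = \<zero>\<^bsub>M\<^esub>)"
        unfolding e using assms(4) in1 z unfolding bij_betw_def inj_on_def by (metis M.zero_closed)
    qed
    then show ?thesis unfolding relations_def by blast
  qed
  then show ?thesis unfolding fin_pres_def using g' c g(3) by metis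
qed


lemma (in fmod) lc_restrict_coeff:
  assumes "c \<in> {..<n} \<rightarrow> carrier R" "g \<in> {..<n} \<rightarrow> carrier M"
  shows "lin_comb M n (restrict c {..<n}) g = lin_comb M n c g"
  by (rule lc_cong) (use assms in auto)

lemma kernel_fg:
  fixes F :: "('a,'b) module" and M :: "('a,'c) module"
  assumes FF: "fmod R F" and MM: "fmod R M" and lin: "linmap R F M \<phi>"
    and surj: "\<And>y. y \<in> carrier M \<Longrightarrow> \<exists>x\<in>carrier F. \<phi> x = y"
    and fgF: "fin_gen R F (carrier F)" and fpM: "fin_pres R M"
  shows "fin_gen R F {x \<in> carrier F. \<phi> x = \<zero>\<^bsub>M\<^esub>}"
proof -
  interpret F: fmod R F by fact
  interpret M: fmod R M by fact
  interpret Fr: fmod R "free_module R n" for n by (rule fmod_free[OF F.is_cring])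
  obtain n g where g: "g \<in> {..<n} \<rightarrow> carrier M" "carrier M = span_gens R M n g"
    and rel: "fin_gen R (free_module R n) (relations R M n g)"
    using fpM unfolding fin_pres_def by blast
  have relsub: "relations R M n g \<subseteq> carrier (free_module R n)" unfolding relations_def by auto
  obtain t \<kappa> where \<kappa>: "\<kappa> \<in> {..<t} \<rightarrow> relations R M n g" "relations R M n g = span_gens R (free_module R n) t \<kappa>"
    "\<kappa> \<in> {..<t} \<rightarrow> carrier (free_module R n)"
    using Fr.fin_genE[OF rel relsub] .
  obtain m e where e: "e \<in> {..<m} \<rightarrow> carrier F" "carrier F = span_gens R F m e"
    using fgF unfolding fin_gen_def by blast
  define p where "p i = (SOME p. p \<in> carrier F \<and> \<phi> p = g i)" for i
  have p: "\<And>i. i < n \<Longrightarrow> p i \<in> carrier F \<and> \<phi> (p i) = g i"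
  proof -
    fix i assume "i < n"
    then have "\<exists>p. p \<in> carrier F \<and> \<phi> p = g i" using surj g(1) by blast
    then show "p i \<in> carrier F \<and> \<phi> (p i) = g i" unfolding p_def by (rule someI_ex)
  qed
  have pc: "p \<in> {..<n} \<rightarrow> carrier F" using p by auto
  define \<psi> where "\<psi> c = lin_comb F n c p" for c
  have \<psi>lin: "linmap R (free_module R n) F \<psi>" unfolding \<psi>_def by (rule lcmap_linear[OF FF pc])
  have \<psi>c: "\<And>c. c \<in> carrier (free_module R n) \<Longrightarrow> \<psi> c \<in> carrier F" using linmapD(1)[OF \<psi>lin] .
  have \<phi>\<psi>: "\<phi> (\<psi> c) = lin_comb M n c g" if c: "c \<in> carrier (free_module R n)" for c
  proof -
    have c': "c \<in> {..<n} \<rightarrow> carrier R" using c by auto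
    have "\<phi> (\<psi> c) = lin_comb M n c (\<lambda>i. \<phi> (p i))"
      unfolding \<psi>_def by (rule lc_linear[OF F.module_axioms M.module_axioms lin c' pc])
    also have "\<dots> = lin_comb M n c g" using c' p linmapD(1)[OF lin] pc
      by (intro M.lc_cong) auto
    finally show ?thesis .
  qed
  have wex: "\<exists>w. w \<in> carrier (free_module R n) \<and> lin_comb M n w g = \<phi> (e j)" if j: "j < m" for j
  proof -
    have "\<phi> (e j) \<in> carrier M" using e(1) j linmapD(1)[OF lin] by auto
    then obtain c where c: "c \<in> {..<n} \<rightarrow> carrier R" "\<phi> (e j) = lin_comb M n c g"
      using g(2) unfolding span_gens_def by blast
    have "restrict c {..<n} \<in> carrier (free_module R n)" using c by auto
    moreover have "lin_comb M n (restrict c {..<n}) g = \<phi> (e j)" using c g(1)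
      by (simp add: M.lc_restrict_coeff)
    ultimately show ?thesis by blast
  qed
  define w where "w j = (SOME w. w \<in> carrier (free_module R n) \<and> lin_comb M n w g = \<phi> (e j))" for j
  have w: "\<And>j. j < m \<Longrightarrow> w j \<in> carrier (free_module R n) \<and> lin_comb M n (w j) g = \<phi> (e j)"
    unfolding w_def using wex by (rule someI_ex)
  have wc: "w \<in> {..<m} \<rightarrow> carrier (free_module R n)" using w by auto
  define K where "K = {x \<in> carrier F. \<phi> x = \<zero>\<^bsub>M\<^esub>}"
  have Ksub: "submodule K R F" unfolding K_def by (rule kernel_submodule[OF FF MM lin])
  define G1 where "G1 l = \<psi> (\<kappa> l)" for l
  define G2 where "G2 j = e j \<ominus>\<^bsub>F\<^esub> \<psi> (w j)" for j
  define G where "G k = (if k < t then G1 k else G2 (k - t))" for k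
  have G1K: "G1 \<in> {..<t} \<rightarrow> K"
  proof
    fix l assume l: "l \<in> {..<t}"
    then have "\<kappa> l \<in> relations R M n g" using \<kappa>(1) by auto
    then have "\<kappa> l \<in> carrier (free_module R n)" "lin_comb M n (\<kappa> l) g = \<zero>\<^bsub>M\<^esub>"
      unfolding relations_def by auto
    then show "G1 l \<in> K" unfolding G1_def K_def using \<phi>\<psi> \<psi>c by auto
  qed
  have G2K: "G2 \<in> {..<m} \<rightarrow> K"
  proof
    fix j assume j: "j \<in> {..<m}"
    have ej: "e j \<in> carrier F" using e(1) j by auto
    have wj: "w j \<in> carrier (free_module R n)" "lin_comb M n (w j) g = \<phi> (e j)" using w j by auto
    have "\<phi> (G2 j) = \<phi> (e j) \<ominus>\<^bsub>M\<^esub> \<phi> (\<psi> (w j))"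
      unfolding G2_def by (rule linmap_minus[OF FF MM lin ej \<psi>c[OF wj(1)]])
    also have "\<dots> = \<zero>\<^bsub>M\<^esub>" using \<phi>\<psi>[OF wj(1)] wj(2) ej linmapD(1)[OF lin] by (simp add: M.r_neg a_minus_def)
    finally show "G2 j \<in> K" unfolding K_def G2_def using ej \<psi>c[OF wj(1)] by auto
  qed
  have GK: "G \<in> {..<t+m} \<rightarrow> K" unfolding G_def using G1K G2K by (auto simp: Pi_iff)
  have KF: "K \<subseteq> carrier F" unfolding K_def by auto
  have G1c: "G1 \<in> {..<t} \<rightarrow> carrier F" and G2c: "G2 \<in> {..<m} \<rightarrow> carrier F" using G1K G2K KF by auto
  have "K \<subseteq> span_gens R F (t+m) G"
  proof
    fix x assume x: "x \<in> K"
    then have xF: "x \<in> carrier F" and x0: "\<phi> x = \<zero>\<^bsub>M\<^esub>" unfolding K_def by auto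
    then obtain c where c: "c \<in> {..<m} \<rightarrow> carrier R" "x = lin_comb F m c e"
      using e(2) unfolding span_gens_def by blast
    define W where "W = lin_comb (free_module R n) m c w"
    have Wc: "W \<in> carrier (free_module R n)" unfolding W_def using c(1) wc by (rule Fr.lc_closed)
    have "lin_comb M n W g = lin_comb M m c (\<lambda>j. lin_comb M n (w j) g)"
      unfolding W_def by (rule lc_linear[OF Fr.module_axioms M.module_axioms lcmap_linear[OF MM g(1)] c(1) wc])
    also have "\<dots> = lin_comb M m c (\<lambda>j. \<phi> (e j))"
      using w c(1) wc g(1) by (intro M.lc_cong) (auto intro!: M.lc_closed)
    also have "\<dots> = \<phi> (lin_comb F m c e)"
      by (rule lc_linear[OF F.module_axioms M.module_axioms lin c(1) e(1), symmetric])
    also have "\<dots> = \<zero>\<^bsub>M\<^esub>" using x0 c(2) by simp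
    finally have "W \<in> relations R M n g" unfolding relations_def using Wc by simp
    then obtain d where d: "d \<in> {..<t} \<rightarrow> carrier R" "W = lin_comb (free_module R n) t d \<kappa>"
      using \<kappa>(2) unfolding span_gens_def by blast
    have \<psi>W1: "\<psi> W = lin_comb F t d G1"
      unfolding d(2) G1_def by (rule lc_linear[OF Fr.module_axioms F.module_axioms \<psi>lin d(1) \<kappa>(3)])
    have \<psi>W2: "\<psi> W = lin_comb F m c (\<lambda>j. \<psi> (w j))"
      unfolding W_def by (rule lc_linear[OF Fr.module_axioms F.module_axioms \<psi>lin c(1) wc])
    have \<psi>wc: "(\<lambda>j. \<psi> (w j)) \<in> {..<m} \<rightarrow> carrier F" using w \<psi>c by auto
    have "x = lin_comb F m c (\<lambda>j. G2 j \<oplus>\<^bsub>F\<^esub> \<psi> (w j))"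
      unfolding c(2) using c(1) e(1) \<psi>wc by (intro F.lc_cong) (auto simp: G2_def a_minus_def F.a_assoc F.l_neg Pi_iff)
    also have "\<dots> = lin_comb F m c G2 \<oplus>\<^bsub>F\<^esub> lin_comb F m c (\<lambda>j. \<psi> (w j))"
      by (rule F.lc_add_gens[OF c(1) G2c \<psi>wc])
    also have "\<dots> = lin_comb F t d G1 \<oplus>\<^bsub>F\<^esub> lin_comb F m c G2"
      using \<psi>W1 \<psi>W2 c(1) G2c d(1) G1c by (simp add: F.a_comm F.lc_closed)
    finally have xx: "x = lin_comb F t d G1 \<oplus>\<^bsub>F\<^esub> lin_comb F m c G2" .
    have "lin_comb F t d G1 \<in> span_gens R F t G1" using d(1) unfolding span_gens_def by blast
    moreover have "lin_comb F m c G2 \<in> span_gens R F m G2" using c(1) unfolding span_gens_def by blast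
    ultimately have "x \<in> span_gens R F (t+m) (\<lambda>k. if k < t then G1 k else G2 (k - t))"
      unfolding xx by (rule F.span_append[OF _ _ G1c G2c])
    then show "x \<in> span_gens R F (t+m) G" unfolding G_def .
  qed
  then show ?thesis unfolding K_def[symmetric] by (rule F.fin_genI[OF Ksub GK])
qed

lemma relations_fg:
  fixes M :: "('a,'c) module"
  assumes MM: "fmod R M" and fp: "fin_pres R M" and h: "h \<in> {..<m} \<rightarrow> carrier M"
    and gen: "carrier M = span_gens R M m h"
  shows "fin_gen R (free_module R m) (relations R M m h)"
proof -
  interpret M: fmod R M by fact
  have FF: "fmod R (free_module R m)" by (rule fmod_free[OF M.is_cring])
  have surj: "\<exists>x\<in>carrier (free_module R m). lin_comb M m x h = y" if y: "y \<in> carrier M" for y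
  proof -
    obtain c where c: "c \<in> {..<m} \<rightarrow> carrier R" "y = lin_comb M m c h"
      using y gen unfolding span_gens_def by blast
    have "restrict c {..<m} \<in> carrier (free_module R m)" using c by auto
    moreover have "lin_comb M m (restrict c {..<m}) h = y" using c h
      by (simp add: M.lc_restrict_coeff)
    ultimately show ?thesis by blast
  qed
  have "fin_gen R (free_module R m) {x \<in> carrier (free_module R m). lin_comb M m x h = \<zero>\<^bsub>M\<^esub>}"
    by (rule kernel_fg[OF FF MM lcmap_linear[OF MM h] surj free_fin_gen[OF M.is_cring] fp])
  moreover have "{x \<in> carrier (free_module R m). lin_comb M m x h = \<zero>\<^bsub>M\<^esub>} = relations R M m h"
    unfolding relations_def by simp
  ultimately show ?thesis by simp
qed


lemma (in fmod) lc_zero_gens: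
  assumes "c \<in> {..<n} \<rightarrow> carrier R"
  shows "lin_comb M n c (\<lambda>i. \<zero>\<^bsub>M\<^esub>) = \<zero>\<^bsub>M\<^esub>"
proof -
  have "lin_comb M n c (\<lambda>i. \<zero>\<^bsub>M\<^esub>) = finsum M (\<lambda>i. \<zero>\<^bsub>M\<^esub>) {..<n}"
    unfolding lin_comb_def using assms by (intro M.finsum_cong') (auto simp: Pi_iff)
  then show ?thesis by simp
qed

lemma Pi_lessThan_Suc: "f \<in> {..<Suc s} \<rightarrow> A \<Longrightarrow> f \<in> {..<s} \<rightarrow> A" by auto

lemma vcat_aux: "\<not> x < n \<Longrightarrow> x < n + q \<Longrightarrow> x - n < (q::nat)" by arith

definition vcat :: "nat \<Rightarrow> nat \<Rightarrow> (nat \<Rightarrow> 'a) \<Rightarrow> (nat \<Rightarrow> 'a) \<Rightarrow> nat \<Rightarrow> 'a" where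
  "vcat n q u v = (\<lambda>k\<in>{..<n+q}. if k < n then u k else v (k - n))"

lemma vcat_carrier:
  "u \<in> carrier (free_module R n) \<Longrightarrow> v \<in> carrier (free_module R q) \<Longrightarrow> vcat n q u v \<in> carrier (free_module R (n+q))"
  unfolding vcat_def by (auto simp: PiE_iff)

lemma vcat_add:
  "vcat n q u v \<oplus>\<^bsub>free_module R (n+q)\<^esub> vcat n q u' v' =
   vcat n q (u \<oplus>\<^bsub>free_module R n\<^esub> u') (v \<oplus>\<^bsub>free_module R q\<^esub> v')"
  unfolding vcat_def by (rule ext) (simp add: vcat_aux)

lemma vcat_smult:
  "a \<odot>\<^bsub>free_module R (n+q)\<^esub> vcat n q u v = vcat n q (a \<odot>\<^bsub>free_module R n\<^esub> u) (a \<odot>\<^bsub>free_module R q\<^esub> v)"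
  unfolding vcat_def by (rule ext) (simp add: vcat_aux)

lemma vcat_zero: "vcat n q (\<lambda>i\<in>{..<n}. \<zero>\<^bsub>R\<^esub>) (\<lambda>i\<in>{..<q}. \<zero>\<^bsub>R\<^esub>) = (\<lambda>i\<in>{..<n+q}. \<zero>\<^bsub>R\<^esub>)"
  unfolding vcat_def by (rule ext) (simp add: vcat_aux)

lemma vcat_lc:
  assumes "cring R" "c \<in> {..<s} \<rightarrow> carrier R" "\<alpha> \<in> {..<s} \<rightarrow> carrier (free_module R n)"
    "\<beta> \<in> {..<s} \<rightarrow> carrier (free_module R q)"
  shows "lin_comb (free_module R (n+q)) s c (\<lambda>l. vcat n q (\<alpha> l) (\<beta> l)) =
         vcat n q (lin_comb (free_module R n) s c \<alpha>) (lin_comb (free_module R q) s c \<beta>)"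
proof -
  interpret F: fmod R "free_module R k" for k by (rule fmod_free[OF assms(1)])
  show ?thesis using assms(2-4)
  proof (induction s)
    case 0
    show ?case unfolding F.lc_0 free_zero vcat_zero ..
  next
    case (Suc s)
    have c: "c \<in> {..<s} \<rightarrow> carrier R" "\<alpha> \<in> {..<s} \<rightarrow> carrier (free_module R n)"
      "\<beta> \<in> {..<s} \<rightarrow> carrier (free_module R q)" using Suc.prems by (simp_all only: Pi_lessThan_Suc)
    have vc: "(\<lambda>l. vcat n q (\<alpha> l) (\<beta> l)) \<in> {..<Suc s} \<rightarrow> carrier (free_module R (n+q))"
    proof
      fix l assume "l \<in> {..<Suc s}"
      then show "vcat n q (\<alpha> l) (\<beta> l) \<in> carrier (free_module R (n+q))"
        using Suc.prems by (intro vcat_carrier) (auto simp del: free_carrier)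
    qed
    have "lin_comb (free_module R (n+q)) (Suc s) c (\<lambda>l. vcat n q (\<alpha> l) (\<beta> l)) =
       lin_comb (free_module R (n+q)) s c (\<lambda>l. vcat n q (\<alpha> l) (\<beta> l)) \<oplus>\<^bsub>free_module R (n+q)\<^esub>
       c s \<odot>\<^bsub>free_module R (n+q)\<^esub> vcat n q (\<alpha> s) (\<beta> s)"
      by (rule F.lc_Suc[OF Suc.prems(1) vc])
    also have "\<dots> = vcat n q (lin_comb (free_module R n) s c \<alpha>) (lin_comb (free_module R q) s c \<beta>) \<oplus>\<^bsub>free_module R (n+q)\<^esub>
       vcat n q (c s \<odot>\<^bsub>free_module R n\<^esub> \<alpha> s) (c s \<odot>\<^bsub>free_module R q\<^esub> \<beta> s)"
      by (simp only: Suc.IH[OF c] vcat_smult)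
    also have "\<dots> = vcat n q (lin_comb (free_module R n) s c \<alpha> \<oplus>\<^bsub>free_module R n\<^esub> c s \<odot>\<^bsub>free_module R n\<^esub> \<alpha> s)
        (lin_comb (free_module R q) s c \<beta> \<oplus>\<^bsub>free_module R q\<^esub> c s \<odot>\<^bsub>free_module R q\<^esub> \<beta> s)"
      by (rule vcat_add)
    also have "\<dots> = vcat n q (lin_comb (free_module R n) (Suc s) c \<alpha>) (lin_comb (free_module R q) (Suc s) c \<beta>)"
      by (simp only: F.lc_Suc[OF Suc.prems(1,2)] F.lc_Suc[OF Suc.prems(1,3)])
    finally show ?case .
  qed
qed

lemma (in fmod) lc_vcat:
  assumes "u \<in> carrier (free_module R n)" "v \<in> carrier (free_module R q)"
    "g \<in> {..<n} \<rightarrow> carrier M" "h \<in> {..<q} \<rightarrow> carrier M"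
  shows "lin_comb M (n+q) (vcat n q u v) (\<lambda>k. if k < n then g k else h (k - n)) =
         lin_comb M n u g \<oplus>\<^bsub>M\<^esub> lin_comb M q v h"
proof -
  let ?G = "\<lambda>k. if k < n then g k else h (k - n)"
  have C: "vcat n q u v \<in> {..<n+q} \<rightarrow> carrier R" using vcat_carrier[OF assms(1,2)] by auto
  have G: "?G \<in> {..<n+q} \<rightarrow> carrier M" using assms by (auto simp: Pi_iff)
  have "lin_comb M (n+q) (vcat n q u v) ?G = lin_comb M n (vcat n q u v) ?G \<oplus>\<^bsub>M\<^esub>
          lin_comb M q (\<lambda>i. vcat n q u v (n+i)) (\<lambda>i. ?G (n+i))"
    by (rule lc_append[OF C G])
  also have "lin_comb M n (vcat n q u v) ?G = lin_comb M n u g"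
    using assms C by (intro lc_cong) (auto simp: vcat_def)
  also have "lin_comb M q (\<lambda>i. vcat n q u v (n+i)) (\<lambda>i. ?G (n+i)) = lin_comb M q v h"
    using assms C by (intro lc_cong) (auto simp: vcat_def)
  finally show ?thesis .
qed

lemma vcat_split:
  assumes "r \<in> carrier (free_module R (n+q))"
  shows "r = vcat n q (restrict r {..<n}) (\<lambda>i\<in>{..<q}. r (n+i))"
  using assms unfolding vcat_def by (auto simp: PiE_iff extensional_def fun_eq_iff)

lemma fin_pres_ext:
  fixes M :: "('a,'b) module" and Q :: "('a,'c) module"
  assumes MM: "fmod R M" and QQ: "fmod R Q" and Nsub: "submodule N R M"
    and fpN: "fin_pres R (M\<lparr>carrier := N\<rparr>)" and lin: "linmap R M Q \<phi>"
    and surj: "\<And>y. y \<in> carrier Q \<Longrightarrow> \<exists>x\<in>carrier M. \<phi> x = y"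
    and ker: "\<And>x. x \<in> carrier M \<Longrightarrow> \<phi> x = \<zero>\<^bsub>Q\<^esub> \<longleftrightarrow> x \<in> N"
    and fpQ: "fin_pres R Q"
  shows "fin_pres R M"
proof -
  interpret M: fmod R M by fact
  interpret Q: fmod R Q by fact
  interpret Fr: fmod R "free_module R k" for k by (rule fmod_free[OF M.is_cring])
  have NM: "N \<subseteq> carrier M" using M.submoduleE(1)[OF Nsub] .
  obtain n g where gN: "g \<in> {..<n} \<rightarrow> N" and gspan0: "N = span_gens R (M\<lparr>carrier := N\<rparr>) n g"
    and rel0: "fin_gen R (free_module R n) (relations R (M\<lparr>carrier := N\<rparr>) n g)"
    using fpN unfolding fin_pres_def by auto
  have gspan: "N = span_gens R M n g" using gspan0 span_restrict[OF MM Nsub gN] by simp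
  have rel: "fin_gen R (free_module R n) (relations R M n g)" using rel0 relations_restrict[OF MM Nsub gN] by simp
  have gc: "g \<in> {..<n} \<rightarrow> carrier M" using gN NM by auto
  have relsub: "relations R M n g \<subseteq> carrier (free_module R n)" unfolding relations_def by auto
  obtain t \<kappa> where \<kappa>: "\<kappa> \<in> {..<t} \<rightarrow> relations R M n g" "relations R M n g = span_gens R (free_module R n) t \<kappa>"
    "\<kappa> \<in> {..<t} \<rightarrow> carrier (free_module R n)"
    using Fr.fin_genE[OF rel relsub] .
  obtain q h where h: "h \<in> {..<q} \<rightarrow> carrier Q" "carrier Q = span_gens R Q q h"
    and relh: "fin_gen R (free_module R q) (relations R Q q h)"
    using fpQ unfolding fin_pres_def by blast
  have relhsub: "relations R Q q h \<subseteq> carrier (free_module R q)" unfolding relations_def by auto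
  obtain s \<rho> where \<rho>: "\<rho> \<in> {..<s} \<rightarrow> relations R Q q h" "relations R Q q h = span_gens R (free_module R q) s \<rho>"
    "\<rho> \<in> {..<s} \<rightarrow> carrier (free_module R q)"
    using Fr.fin_genE[OF relh relhsub] .
  define h' where "h' j = (SOME x. x \<in> carrier M \<and> \<phi> x = h j)" for j
  have h': "\<And>j. j < q \<Longrightarrow> h' j \<in> carrier M \<and> \<phi> (h' j) = h j"
  proof -
    fix j assume "j < q"
    then have "\<exists>x. x \<in> carrier M \<and> \<phi> x = h j" using surj h(1) by blast
    then show "h' j \<in> carrier M \<and> \<phi> (h' j) = h j" unfolding h'_def by (rule someI_ex)
  qed
  have h'c: "h' \<in> {..<q} \<rightarrow> carrier M" using h' by auto
  have \<phi>h': "\<phi> (lin_comb M q v h') = lin_comb Q q v h" if v: "v \<in> {..<q} \<rightarrow> carrier R" for v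
  proof -
    have "\<phi> (lin_comb M q v h') = lin_comb Q q v (\<lambda>j. \<phi> (h' j))"
      by (rule lc_linear[OF M.module_axioms Q.module_axioms lin v h'c])
    also have "\<dots> = lin_comb Q q v h" using v h' linmapD(1)[OF lin] h'c by (intro Q.lc_cong) auto
    finally show ?thesis .
  qed
  define G where "G k = (if k < n then g k else h' (k - n))" for k
  have Gc: "G \<in> {..<n+q} \<rightarrow> carrier M" unfolding G_def using gc h'c by (auto simp: Pi_iff)
  have span: "carrier M = span_gens R M (n+q) G"
  proof (rule equalityI)
    show "span_gens R M (n+q) G \<subseteq> carrier M" by (rule M.span_sub[OF Gc])
  next
    show "carrier M \<subseteq> span_gens R M (n+q) G"
    proof
      fix x assume x: "x \<in> carrier M"
      then have "\<phi> x \<in> carrier Q" using linmapD(1)[OF lin] by auto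
      then obtain d where d: "d \<in> {..<q} \<rightarrow> carrier R" "\<phi> x = lin_comb Q q d h"
        using h(2) unfolding span_gens_def by blast
      define y where "y = lin_comb M q d h'"
      have yc: "y \<in> carrier M" unfolding y_def using d(1) h'c by (rule M.lc_closed)
      have "\<phi> (x \<ominus>\<^bsub>M\<^esub> y) = \<zero>\<^bsub>Q\<^esub>"
        using linmap_minus[OF MM QQ lin x yc] \<phi>h'[OF d(1)] d(2) y_def
        by (simp add: a_minus_def Q.r_neg Q.lc_closed d(1) h(1))
      then have "x \<ominus>\<^bsub>M\<^esub> y \<in> N" using ker x yc by simp
      then have "x \<ominus>\<^bsub>M\<^esub> y \<in> span_gens R M n g" using gspan by simp
      moreover have "y \<in> span_gens R M q h'" unfolding y_def span_gens_def using d(1) by blast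
      ultimately have "(x \<ominus>\<^bsub>M\<^esub> y) \<oplus>\<^bsub>M\<^esub> y \<in> span_gens R M (n+q) G"
        unfolding G_def by (rule M.span_append[OF _ _ gc h'c])
      moreover have "(x \<ominus>\<^bsub>M\<^esub> y) \<oplus>\<^bsub>M\<^esub> y = x" using x yc
        by (simp add: a_minus_def M.a_assoc M.l_neg)
      ultimately show "x \<in> span_gens R M (n+q) G" by simp
    qed
  qed
  define y where "y l = lin_comb M q (\<rho> l) h'" for l
  have yc: "\<And>l. l < s \<Longrightarrow> y l \<in> carrier M"
    unfolding y_def using \<rho>(3) h'c by (auto intro!: M.lc_closed)
  have yN: "\<And>l. l < s \<Longrightarrow> \<ominus>\<^bsub>M\<^esub> y l \<in> N"
  proof -
    fix l assume l: "l < s"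
    have \<rho>l: "\<rho> l \<in> {..<q} \<rightarrow> carrier R" "lin_comb Q q (\<rho> l) h = \<zero>\<^bsub>Q\<^esub>"
      using \<rho>(1) l unfolding relations_def by auto
    have "\<phi> (y l) = \<zero>\<^bsub>Q\<^esub>" unfolding y_def using \<phi>h'[OF \<rho>l(1)] \<rho>l(2) by simp
    then have "y l \<in> N" using ker yc[OF l] by simp
    then show "\<ominus>\<^bsub>M\<^esub> y l \<in> N" by (rule M.submoduleE(3)[OF Nsub])
  qed
  have \<sigma>ex: "\<exists>\<sigma>. \<sigma> \<in> carrier (free_module R n) \<and> lin_comb M n \<sigma> g = \<ominus>\<^bsub>M\<^esub> y l" if l: "l < s" for l
  proof -
    obtain c where c: "c \<in> {..<n} \<rightarrow> carrier R" "\<ominus>\<^bsub>M\<^esub> y l = lin_comb M n c g"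
      using yN[OF l] gspan unfolding span_gens_def by auto
    have "restrict c {..<n} \<in> carrier (free_module R n)" using c by auto
    moreover have "lin_comb M n (restrict c {..<n}) g = \<ominus>\<^bsub>M\<^esub> y l"
      using c gc by (simp add: M.lc_restrict_coeff)
    ultimately show ?thesis by blast
  qed
  define \<sigma> where "\<sigma> l = (SOME \<sigma>. \<sigma> \<in> carrier (free_module R n) \<and> lin_comb M n \<sigma> g = \<ominus>\<^bsub>M\<^esub> y l)" for l
  have \<sigma>: "\<And>l. l < s \<Longrightarrow> \<sigma> l \<in> carrier (free_module R n) \<and> lin_comb M n (\<sigma> l) g = \<ominus>\<^bsub>M\<^esub> y l"
    unfolding \<sigma>_def using \<sigma>ex by (rule someI_ex)
  have \<sigma>c: "\<sigma> \<in> {..<s} \<rightarrow> carrier (free_module R n)" using \<sigma> by auto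
  define z where "z = (\<lambda>i\<in>{..<q}. \<zero>\<^bsub>R\<^esub>)"
  have zc: "z \<in> carrier (free_module R q)" unfolding z_def by auto
  define K1 where "K1 l = vcat n q (\<kappa> l) z" for l
  define K2 where "K2 l = vcat n q (\<sigma> l) (\<rho> l)" for l
  define K where "K k = (if k < t then K1 k else K2 (k - t))" for k
  define Rel where "Rel = relations R M (n+q) G"
  have Relsub: "submodule Rel R (free_module R (n+q))"
  proof -
    have "Rel = {x \<in> carrier (free_module R (n+q)). lin_comb M (n+q) x G = \<zero>\<^bsub>M\<^esub>}"
      unfolding Rel_def relations_def by simp
    then show ?thesis using kernel_submodule[OF fmod_free[OF M.is_cring] MM lcmap_linear[OF MM Gc]] by simp
  qed
  have lcG: "lin_comb M (n+q) (vcat n q u v) G = lin_comb M n u g \<oplus>\<^bsub>M\<^esub> lin_comb M q v h'"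
    if "u \<in> carrier (free_module R n)" "v \<in> carrier (free_module R q)" for u v
    unfolding G_def by (rule M.lc_vcat[OF that gc h'c])
  have K1R: "K1 \<in> {..<t} \<rightarrow> Rel"
  proof
    fix l assume l: "l \<in> {..<t}"
    have kl: "\<kappa> l \<in> carrier (free_module R n)" "lin_comb M n (\<kappa> l) g = \<zero>\<^bsub>M\<^esub>"
      using \<kappa>(1) l unfolding relations_def by auto
    have "lin_comb M q z h' = lin_comb M q (\<lambda>i. \<zero>\<^bsub>R\<^esub>) h'"
      using zc h'c unfolding z_def by (intro M.lc_cong) auto
    also have "\<dots> = \<zero>\<^bsub>M\<^esub>" by (rule M.lc_zero_coeff[OF h'c])
    finally have "lin_comb M (n+q) (K1 l) G = \<zero>\<^bsub>M\<^esub>" unfolding K1_def lcG[OF kl(1) zc] kl(2) by simp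
    then show "K1 l \<in> Rel" unfolding Rel_def relations_def K1_def using vcat_carrier[OF kl(1) zc] by simp
  qed
  have K2R: "K2 \<in> {..<s} \<rightarrow> Rel"
  proof
    fix l assume l: "l \<in> {..<s}"
    have rl: "\<rho> l \<in> carrier (free_module R q)" using \<rho>(3) l by auto
    have "lin_comb M (n+q) (K2 l) G = \<ominus>\<^bsub>M\<^esub> y l \<oplus>\<^bsub>M\<^esub> y l"
      unfolding K2_def lcG[OF \<sigma>c[THEN funcset_mem, OF l] rl] using \<sigma> l y_def by simp
    also have "\<dots> = \<zero>\<^bsub>M\<^esub>" using yc l by (simp add: M.l_neg)
    finally show "K2 l \<in> Rel" unfolding Rel_def relations_def K2_def
      using vcat_carrier[OF \<sigma>c[THEN funcset_mem, OF l] rl] by simp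
  qed
  have KR: "K \<in> {..<t+s} \<rightarrow> Rel" unfolding K_def using K1R K2R by (auto simp: Pi_iff)
  have RelF: "Rel \<subseteq> carrier (free_module R (n+q))" unfolding Rel_def relations_def by auto
  have K1c: "K1 \<in> {..<t} \<rightarrow> carrier (free_module R (n+q))" and K2c: "K2 \<in> {..<s} \<rightarrow> carrier (free_module R (n+q))"
    using K1R K2R RelF by auto
  have "Rel \<subseteq> span_gens R (free_module R (n+q)) (t+s) K"
  proof
    fix r assume r: "r \<in> Rel"
    then have rc: "r \<in> carrier (free_module R (n+q))" and r0: "lin_comb M (n+q) r G = \<zero>\<^bsub>M\<^esub>"
      unfolding Rel_def relations_def by auto
    define u where "u = restrict r {..<n}"
    define v where "v = (\<lambda>i\<in>{..<q}. r (n+i))"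
    have uc: "u \<in> carrier (free_module R n)" unfolding u_def using rc by (auto simp: PiE_iff)
    have vc: "v \<in> carrier (free_module R q)" unfolding v_def using rc by (auto simp: PiE_iff)
    have ruv: "r = vcat n q u v" unfolding u_def v_def by (rule vcat_split[OF rc])
    have lu: "lin_comb M n u g \<in> carrier M" using uc gc by (auto intro!: M.lc_closed)
    have lv: "lin_comb M q v h' \<in> carrier M" using vc h'c by (auto intro!: M.lc_closed)
    have sum0: "lin_comb M n u g \<oplus>\<^bsub>M\<^esub> lin_comb M q v h' = \<zero>\<^bsub>M\<^esub>"
      using r0 unfolding ruv lcG[OF uc vc] .
    have uN: "lin_comb M n u g \<in> N" using gspan uc unfolding span_gens_def by auto
    have "\<phi> (lin_comb M n u g) = \<zero>\<^bsub>Q\<^esub>" using ker lu uN by simp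
    note \<phi>u = this
    have vP: "v \<in> {..<q} \<rightarrow> carrier R" using vc by (simp add: PiE_def)
    have "\<zero>\<^bsub>Q\<^esub> = \<phi> (lin_comb M n u g \<oplus>\<^bsub>M\<^esub> lin_comb M q v h')"
      using sum0 linmap_zero[OF M.module_axioms Q.module_axioms lin] by simp
    also have "\<dots> = \<phi> (lin_comb M n u g) \<oplus>\<^bsub>Q\<^esub> \<phi> (lin_comb M q v h')"
      by (rule linmapD(2)[OF lin lu lv])
    also have "\<dots> = \<zero>\<^bsub>Q\<^esub> \<oplus>\<^bsub>Q\<^esub> lin_comb Q q v h" using \<phi>u \<phi>h'[OF vP] by simp
    finally have "\<zero>\<^bsub>Q\<^esub> = \<zero>\<^bsub>Q\<^esub> \<oplus>\<^bsub>Q\<^esub> lin_comb Q q v h" .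
    then have "lin_comb Q q v h = \<zero>\<^bsub>Q\<^esub>" using vP h(1) by (simp add: Q.lc_closed)
    then have "v \<in> relations R Q q h" unfolding relations_def using vc by simp
    then obtain c where c: "c \<in> {..<s} \<rightarrow> carrier R" "v = lin_comb (free_module R q) s c \<rho>"
      using \<rho>(2) unfolding span_gens_def by blast
    define A where "A = lin_comb (free_module R n) s c \<sigma>"
    have Ac: "A \<in> carrier (free_module R n)" unfolding A_def using c(1) \<sigma>c by (rule Fr.lc_closed)
    have ycs: "(\<lambda>l. y l) \<in> {..<s} \<rightarrow> carrier M" using yc by auto
    have nycs: "(\<lambda>l. \<ominus>\<^bsub>M\<^esub> y l) \<in> {..<s} \<rightarrow> carrier M" using yc by auto
    have lA: "lin_comb M n A g = lin_comb M s c (\<lambda>l. \<ominus>\<^bsub>M\<^esub> y l)"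
    proof -
      have "lin_comb M n A g = lin_comb M s c (\<lambda>l. lin_comb M n (\<sigma> l) g)"
        unfolding A_def by (rule lc_linear[OF Fr.module_axioms M.module_axioms lcmap_linear[OF MM gc] c(1) \<sigma>c])
      also have "\<dots> = lin_comb M s c (\<lambda>l. \<ominus>\<^bsub>M\<^esub> y l)"
        using \<sigma> c(1) nycs gc \<sigma>c by (intro M.lc_cong) (auto intro!: M.lc_closed)
      finally show ?thesis .
    qed
    have lv2: "lin_comb M q v h' = lin_comb M s c y"
    proof -
      have "lin_comb M q v h' = lin_comb M s c (\<lambda>l. lin_comb M q (\<rho> l) h')"
        unfolding c(2) by (rule lc_linear[OF Fr.module_axioms M.module_axioms lcmap_linear[OF MM h'c] c(1) \<rho>(3)])
      then show ?thesis unfolding y_def by simp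
    qed
    have "lin_comb M s c (\<lambda>l. \<ominus>\<^bsub>M\<^esub> y l) \<oplus>\<^bsub>M\<^esub> lin_comb M s c y = lin_comb M s c (\<lambda>l. \<ominus>\<^bsub>M\<^esub> y l \<oplus>\<^bsub>M\<^esub> y l)"
      by (rule M.lc_add_gens[OF c(1) nycs ycs, symmetric])
    also have "\<dots> = lin_comb M s c (\<lambda>l. \<zero>\<^bsub>M\<^esub>)"
      using c(1) yc by (intro M.lc_cong) (auto simp: M.l_neg)
    also have "\<dots> = \<zero>\<^bsub>M\<^esub>" by (rule M.lc_zero_gens[OF c(1)])
    finally have Av: "lin_comb M n A g \<oplus>\<^bsub>M\<^esub> lin_comb M q v h' = \<zero>\<^bsub>M\<^esub>" unfolding lA lv2 .
    have lAc: "lin_comb M n A g \<in> carrier M" using Ac gc by (auto intro!: M.lc_closed)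
    have Aeq: "lin_comb M n A g = \<ominus>\<^bsub>M\<^esub> lin_comb M q v h'"
      using Av lAc lv by (intro M.add.inv_equality[symmetric]) auto
    define u' where "u' = u \<ominus>\<^bsub>free_module R n\<^esub> A"
    have u'c: "u' \<in> carrier (free_module R n)" unfolding u'_def using uc Ac by (rule Fr.minus_closed)
    have "lin_comb M n u' g = lin_comb M n u g \<ominus>\<^bsub>M\<^esub> lin_comb M n A g"
      unfolding u'_def by (rule linmap_minus[OF fmod_free[OF M.is_cring] MM lcmap_linear[OF MM gc] uc Ac])
    also have "\<dots> = \<zero>\<^bsub>M\<^esub>" unfolding Aeq using sum0 lu lv by (simp add: a_minus_def)
    finally have "u' \<in> relations R M n g" unfolding relations_def using u'c by simp
    then obtain d where d: "d \<in> {..<t} \<rightarrow> carrier R" "u' = lin_comb (free_module R n) t d \<kappa>"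
      using \<kappa>(2) unfolding span_gens_def by blast
    have zz: "lin_comb (free_module R q) t d (\<lambda>l. z) = z"
      using Fr.lc_zero_gens[OF d(1)] unfolding z_def by simp
    have uu: "u = u' \<oplus>\<^bsub>free_module R n\<^esub> A" unfolding u'_def using uc Ac
      by (simp add: a_minus_def Fr.a_assoc Fr.l_neg del: free_add free_zero free_carrier)
    have vv: "v = z \<oplus>\<^bsub>free_module R q\<^esub> v" using vc Fr.l_zero[of v q] unfolding z_def by simp
    have "r = vcat n q u' z \<oplus>\<^bsub>free_module R (n+q)\<^esub> vcat n q A v"
      unfolding vcat_add ruv using uu vv by simp
    also have "vcat n q u' z = lin_comb (free_module R (n+q)) t d K1"
      unfolding K1_def d(2) using vcat_lc[OF M.is_cring d(1) \<kappa>(3), of "\<lambda>l. z"] zc zz by auto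
    also have "vcat n q A v = lin_comb (free_module R (n+q)) s c K2"
      unfolding K2_def A_def c(2) using vcat_lc[OF M.is_cring c(1) \<sigma>c \<rho>(3)] by simp
    finally have "r = lin_comb (free_module R (n+q)) t d K1 \<oplus>\<^bsub>free_module R (n+q)\<^esub> lin_comb (free_module R (n+q)) s c K2" .
    moreover have "lin_comb (free_module R (n+q)) t d K1 \<in> span_gens R (free_module R (n+q)) t K1"
      using d(1) unfolding span_gens_def by blast
    moreover have "lin_comb (free_module R (n+q)) s c K2 \<in> span_gens R (free_module R (n+q)) s K2"
      using c(1) unfolding span_gens_def by blast
    ultimately show "r \<in> span_gens R (free_module R (n+q)) (t+s) K"
      unfolding K_def using Fr.span_append[OF _ _ K1c K2c] by simp
  qed
  then have "fin_gen R (free_module R (n+q)) Rel" by (rule Fr.fin_genI[OF Relsub KR])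
  then show ?thesis unfolding fin_pres_def Rel_def using Gc span by blast
qed


lemma amalg_simps[simp]:
  "carrier (amalg A B f b) = amalg_carrier A B f b"
  "x \<oplus>\<^bsub>amalg A B f b\<^esub> y = (fst x \<oplus>\<^bsub>A\<^esub> fst y, snd x \<oplus>\<^bsub>B\<^esub> snd y)"
  "x \<otimes>\<^bsub>amalg A B f b\<^esub> y = (fst x \<otimes>\<^bsub>A\<^esub> fst y, snd x \<otimes>\<^bsub>B\<^esub> snd y)"
  "\<zero>\<^bsub>amalg A B f b\<^esub> = (\<zero>\<^bsub>A\<^esub>, \<zero>\<^bsub>B\<^esub>)"
  "\<one>\<^bsub>amalg A B f b\<^esub> = (\<one>\<^bsub>A\<^esub>, \<one>\<^bsub>B\<^esub>)"
  by (simp_all add: amalg_def RDirProd_def DirProd_def monoid.defs case_prod_beta)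

locale amal =
  fixes A :: "('a, 'n) ring_scheme" and B :: "('b, 'm) ring_scheme" and f :: "'a \<Rightarrow> 'b" and b :: "'b set"
  assumes A: "cring A" and B: "cring B" and f: "f \<in> ring_hom A B" and b: "ideal b B"
begin

abbreviation "S \<equiv> amalg A B f b"

sublocale A: cring A by (rule A)
sublocale B: cring B by (rule B)
sublocale b: ideal b B by (rule b)

lemma fc: "x \<in> carrier A \<Longrightarrow> f x \<in> carrier B" using f by (auto simp: ring_hom_def)
lemma f_add: "x \<in> carrier A \<Longrightarrow> y \<in> carrier A \<Longrightarrow> f (x \<oplus>\<^bsub>A\<^esub> y) = f x \<oplus>\<^bsub>B\<^esub> f y" using f by (simp add: ring_hom_add)
lemma f_mult: "x \<in> carrier A \<Longrightarrow> y \<in> carrier A \<Longrightarrow> f (x \<otimes>\<^bsub>A\<^esub> y) = f x \<otimes>\<^bsub>B\<^esub> f y" using f by (simp add: ring_hom_mult)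
lemma f_one: "f \<one>\<^bsub>A\<^esub> = \<one>\<^bsub>B\<^esub>" using f by (simp add: ring_hom_one)
lemma f_zero: "f \<zero>\<^bsub>A\<^esub> = \<zero>\<^bsub>B\<^esub>" using f by (simp add: ring_hom_zero A.ring_axioms B.ring_axioms)

lemma bB: "y \<in> b \<Longrightarrow> y \<in> carrier B" using b.a_subset by auto

lemma b0: "\<zero>\<^bsub>B\<^esub> \<in> b"
  using additive_subgroup.zero_closed[OF ideal.axioms(1)[OF b]] .

lemma S_mem: "p \<in> carrier S \<longleftrightarrow> fst p \<in> carrier A \<and> (\<exists>y\<in>b. snd p = f (fst p) \<oplus>\<^bsub>B\<^esub> y)"
  by (cases p) (auto simp: amalg_carrier_def)

lemma S_memI: "x \<in> carrier A \<Longrightarrow> y \<in> b \<Longrightarrow> (x, f x \<oplus>\<^bsub>B\<^esub> y) \<in> carrier S"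
  by (auto simp: amalg_carrier_def)

lemma S_sub: "p \<in> carrier S \<Longrightarrow> fst p \<in> carrier A \<and> snd p \<in> carrier B"
  using S_mem fc bB by auto

sublocale fh: ring_hom_cring A B f
  by (simp add: ring_hom_cring_def ring_hom_cring_axioms_def A B f)

lemma S_cases:
  assumes "p \<in> carrier S"
  obtains x y where "p = (x, f x \<oplus>\<^bsub>B\<^esub> y)" "x \<in> carrier A" "y \<in> b"
  using assms by (auto simp: amalg_carrier_def)

lemma S_add_closed: "p \<in> carrier S \<Longrightarrow> q \<in> carrier S \<Longrightarrow> p \<oplus>\<^bsub>S\<^esub> q \<in> carrier S"
proof -
  assume p: "p \<in> carrier S" and q: "q \<in> carrier S"
  obtain x1 y1 where 1: "p = (x1, f x1 \<oplus>\<^bsub>B\<^esub> y1)" "x1 \<in> carrier A" "y1 \<in> b" using p by (rule S_cases)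
  obtain x2 y2 where 2: "q = (x2, f x2 \<oplus>\<^bsub>B\<^esub> y2)" "x2 \<in> carrier A" "y2 \<in> b" using q by (rule S_cases)
  have e: "f x1 \<oplus>\<^bsub>B\<^esub> y1 \<oplus>\<^bsub>B\<^esub> (f x2 \<oplus>\<^bsub>B\<^esub> y2) = f (x1 \<oplus>\<^bsub>A\<^esub> x2) \<oplus>\<^bsub>B\<^esub> (y1 \<oplus>\<^bsub>B\<^esub> y2)"
    using 1 2 bB by (simp add: B.a_ac)
  have m: "(x1 \<oplus>\<^bsub>A\<^esub> x2, f (x1 \<oplus>\<^bsub>A\<^esub> x2) \<oplus>\<^bsub>B\<^esub> (y1 \<oplus>\<^bsub>B\<^esub> y2)) \<in> carrier S"
    using 1 2 by (intro S_memI b.a_closed) auto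
  have "p \<oplus>\<^bsub>S\<^esub> q = (x1 \<oplus>\<^bsub>A\<^esub> x2, f (x1 \<oplus>\<^bsub>A\<^esub> x2) \<oplus>\<^bsub>B\<^esub> (y1 \<oplus>\<^bsub>B\<^esub> y2))"
    unfolding 1 2 amalg_simps fst_conv snd_conv e ..
  then show ?thesis using m by simp
qed

lemma S_mult_closed: "p \<in> carrier S \<Longrightarrow> q \<in> carrier S \<Longrightarrow> p \<otimes>\<^bsub>S\<^esub> q \<in> carrier S"
proof -
  assume p: "p \<in> carrier S" and q: "q \<in> carrier S"
  obtain x1 y1 where 1: "p = (x1, f x1 \<oplus>\<^bsub>B\<^esub> y1)" "x1 \<in> carrier A" "y1 \<in> b" using p by (rule S_cases)
  obtain x2 y2 where 2: "q = (x2, f x2 \<oplus>\<^bsub>B\<^esub> y2)" "x2 \<in> carrier A" "y2 \<in> b" using q by (rule S_cases)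
  have y: "y1 \<in> carrier B" "y2 \<in> carrier B" using 1 2 bB by auto
  have fx: "f x1 \<in> carrier B" "f x2 \<in> carrier B" using 1 2 by auto
  have e: "(f x1 \<oplus>\<^bsub>B\<^esub> y1) \<otimes>\<^bsub>B\<^esub> (f x2 \<oplus>\<^bsub>B\<^esub> y2) =
      f (x1 \<otimes>\<^bsub>A\<^esub> x2) \<oplus>\<^bsub>B\<^esub> (f x1 \<otimes>\<^bsub>B\<^esub> y2 \<oplus>\<^bsub>B\<^esub> (y1 \<otimes>\<^bsub>B\<^esub> f x2 \<oplus>\<^bsub>B\<^esub> y1 \<otimes>\<^bsub>B\<^esub> y2))"
    using 1 2 y fx by (simp add: B.l_distr B.r_distr B.a_ac)
  have yy: "f x1 \<otimes>\<^bsub>B\<^esub> y2 \<oplus>\<^bsub>B\<^esub> (y1 \<otimes>\<^bsub>B\<^esub> f x2 \<oplus>\<^bsub>B\<^esub> y1 \<otimes>\<^bsub>B\<^esub> y2) \<in> b"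
    using 1 2 y fx by (intro b.a_closed b.I_l_closed b.I_r_closed) auto
  have m: "(x1 \<otimes>\<^bsub>A\<^esub> x2, f (x1 \<otimes>\<^bsub>A\<^esub> x2) \<oplus>\<^bsub>B\<^esub> (f x1 \<otimes>\<^bsub>B\<^esub> y2 \<oplus>\<^bsub>B\<^esub> (y1 \<otimes>\<^bsub>B\<^esub> f x2 \<oplus>\<^bsub>B\<^esub> y1 \<otimes>\<^bsub>B\<^esub> y2))) \<in> carrier S"
    using 1 2 yy by (intro S_memI) auto
  have "p \<otimes>\<^bsub>S\<^esub> q = (x1 \<otimes>\<^bsub>A\<^esub> x2, f (x1 \<otimes>\<^bsub>A\<^esub> x2) \<oplus>\<^bsub>B\<^esub> (f x1 \<otimes>\<^bsub>B\<^esub> y2 \<oplus>\<^bsub>B\<^esub> (y1 \<otimes>\<^bsub>B\<^esub> f x2 \<oplus>\<^bsub>B\<^esub> y1 \<otimes>\<^bsub>B\<^esub> y2)))"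
    unfolding 1 2 amalg_simps fst_conv snd_conv e ..
  then show ?thesis using m by simp
qed

lemma S_zero_closed: "\<zero>\<^bsub>S\<^esub> \<in> carrier S"
  using S_memI[of "\<zero>\<^bsub>A\<^esub>" "\<zero>\<^bsub>B\<^esub>"] b0 by simp

lemma S_one_closed: "\<one>\<^bsub>S\<^esub> \<in> carrier S"
  using S_memI[of "\<one>\<^bsub>A\<^esub>" "\<zero>\<^bsub>B\<^esub>"] b0 by simp

lemma S_neg_closed: "p \<in> carrier S \<Longrightarrow> (\<ominus>\<^bsub>A\<^esub> fst p, \<ominus>\<^bsub>B\<^esub> snd p) \<in> carrier S"
proof -
  assume p: "p \<in> carrier S"
  obtain x y where 1: "p = (x, f x \<oplus>\<^bsub>B\<^esub> y)" "x \<in> carrier A" "y \<in> b" using p by (rule S_cases)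
  have "\<ominus>\<^bsub>B\<^esub> (f x \<oplus>\<^bsub>B\<^esub> y) = f (\<ominus>\<^bsub>A\<^esub> x) \<oplus>\<^bsub>B\<^esub> \<ominus>\<^bsub>B\<^esub> y"
    using 1 bB by (simp add: B.minus_add)
  moreover have "(\<ominus>\<^bsub>A\<^esub> x, f (\<ominus>\<^bsub>A\<^esub> x) \<oplus>\<^bsub>B\<^esub> \<ominus>\<^bsub>B\<^esub> y) \<in> carrier S"
    using 1 by (intro S_memI b.a_inv_closed) auto
  ultimately show ?thesis unfolding 1 fst_conv snd_conv by simp
qed

lemma cring_S: "cring S"
proof (rule cringI)
  show "abelian_group S"
  proof (rule abelian_groupI)
    fix x y z assume x: "x \<in> carrier S" and y: "y \<in> carrier S" and z: "z \<in> carrier S"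
    note xyz = S_sub[OF x] S_sub[OF y] S_sub[OF z]
    show "x \<oplus>\<^bsub>S\<^esub> y \<in> carrier S" using x y by (rule S_add_closed)
    show "x \<oplus>\<^bsub>S\<^esub> y \<oplus>\<^bsub>S\<^esub> z = x \<oplus>\<^bsub>S\<^esub> (y \<oplus>\<^bsub>S\<^esub> z)"
      using xyz by (simp add: A.a_assoc B.a_assoc)
    show "x \<oplus>\<^bsub>S\<^esub> y = y \<oplus>\<^bsub>S\<^esub> x" using xyz by (simp add: A.a_comm B.a_comm)
    show "\<zero>\<^bsub>S\<^esub> \<oplus>\<^bsub>S\<^esub> x = x" using xyz by simp
    show "\<exists>y\<in>carrier S. y \<oplus>\<^bsub>S\<^esub> x = \<zero>\<^bsub>S\<^esub>"
      using S_neg_closed[OF x] xyz by (intro bexI[of _ "(\<ominus>\<^bsub>A\<^esub> fst x, \<ominus>\<^bsub>B\<^esub> snd x)"]) (auto simp: A.l_neg B.l_neg)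
  next
    show "\<zero>\<^bsub>S\<^esub> \<in> carrier S" by (rule S_zero_closed)
  qed
  show "Group.comm_monoid S"
  proof (rule comm_monoidI)
    fix x y z assume x: "x \<in> carrier S" and y: "y \<in> carrier S" and z: "z \<in> carrier S"
    note xyz = S_sub[OF x] S_sub[OF y] S_sub[OF z]
    show "x \<otimes>\<^bsub>S\<^esub> y \<in> carrier S" using x y by (rule S_mult_closed)
    show "x \<otimes>\<^bsub>S\<^esub> y \<otimes>\<^bsub>S\<^esub> z = x \<otimes>\<^bsub>S\<^esub> (y \<otimes>\<^bsub>S\<^esub> z)"
      using xyz by (simp add: A.m_assoc B.m_assoc)
    show "x \<otimes>\<^bsub>S\<^esub> y = y \<otimes>\<^bsub>S\<^esub> x" using xyz by (simp add: A.m_comm B.m_comm)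
    show "\<one>\<^bsub>S\<^esub> \<otimes>\<^bsub>S\<^esub> x = x" using xyz by simp
  next
    show "\<one>\<^bsub>S\<^esub> \<in> carrier S" by (rule S_one_closed)
  qed
  fix x y z assume x: "x \<in> carrier S" and y: "y \<in> carrier S" and z: "z \<in> carrier S"
  note xyz = S_sub[OF x] S_sub[OF y] S_sub[OF z]
  show "(x \<oplus>\<^bsub>S\<^esub> y) \<otimes>\<^bsub>S\<^esub> z = x \<otimes>\<^bsub>S\<^esub> z \<oplus>\<^bsub>S\<^esub> y \<otimes>\<^bsub>S\<^esub> z"
    using xyz by (simp add: A.l_distr B.l_distr)
qed

sublocale S: cring S by (rule cring_S)

definition \<iota> :: "'a \<Rightarrow> 'a \<times> 'b" where "\<iota> a = (a, f a)"

lemma \<iota>_closed: "a \<in> carrier A \<Longrightarrow> \<iota> a \<in> carrier S"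
  unfolding \<iota>_def using S_memI[of a "\<zero>\<^bsub>B\<^esub>"] b0 by simp

lemma \<iota>_hom: "\<iota> \<in> ring_hom A S"
proof (rule ring_hom_memI)
  show "\<And>x. x \<in> carrier A \<Longrightarrow> \<iota> x \<in> carrier S" by (rule \<iota>_closed)
qed (auto simp: \<iota>_def)

lemma fst_hom: "fst \<in> ring_hom S A"
proof (rule ring_hom_memI)
  show "\<And>x. x \<in> carrier S \<Longrightarrow> fst x \<in> carrier A" using S_sub by blast
qed auto

end


lemma ring_fg_self:
  assumes "cring R"
  shows "fin_gen R (ring_module R) (carrier R)"
proof -
  interpret R: cring R by fact
  interpret M: fmod R "ring_module R" by (rule fmod_ring_module[OF assms])
  have g: "(\<lambda>i. \<one>\<^bsub>R\<^esub>) \<in> {..<1} \<rightarrow> carrier R" by auto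
  show ?thesis
  proof (rule M.fin_genI)
    show "submodule (carrier R) R (ring_module R)" using M.carrier_is_submodule by simp
    show "(\<lambda>i. \<one>\<^bsub>R\<^esub>) \<in> {..<1} \<rightarrow> carrier R" by (rule g)
    show "carrier R \<subseteq> span_gens R (ring_module R) 1 (\<lambda>i. \<one>\<^bsub>R\<^esub>)"
    proof
      fix x assume x: "x \<in> carrier R"
      have "lin_comb (ring_module R) 1 (\<lambda>i. x) (\<lambda>i. \<one>\<^bsub>R\<^esub>) = x"
        using M.lc_Suc[of "\<lambda>i. x" 0 "\<lambda>i. \<one>\<^bsub>R\<^esub>"] x by simp
      then show "x \<in> span_gens R (ring_module R) 1 (\<lambda>i. \<one>\<^bsub>R\<^esub>)"
        unfolding span_gens_def using x by force
    qed
  qed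
qed

lemma hom_lc_ring:
  assumes "ring_hom_cring R R' \<phi>" "c \<in> {..<n} \<rightarrow> carrier R" "g \<in> {..<n} \<rightarrow> carrier R"
  shows "\<phi> (lin_comb (ring_module R) n c g) = lin_comb (ring_module R') n (\<lambda>i. \<phi> (c i)) (\<lambda>i. \<phi> (g i))"
proof -
  interpret h: ring_hom_cring R R' \<phi> by fact
  have "\<phi> (finsum R (\<lambda>i. c i \<otimes>\<^bsub>R\<^esub> g i) {..<n}) = finsum R' (\<phi> \<circ> (\<lambda>i. c i \<otimes>\<^bsub>R\<^esub> g i)) {..<n}"
    using assms by (intro h.hom_finsum) auto
  also have "\<dots> = finsum R' (\<lambda>i. \<phi> (c i) \<otimes>\<^bsub>R'\<^esub> \<phi> (g i)) {..<n}"
    using assms by (intro h.S.finsum_cong') (auto simp: Pi_iff)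
  finally show ?thesis unfolding ring_module_lc .
qed

definition mapfree :: "('a \<Rightarrow> 'b) \<Rightarrow> nat \<Rightarrow> (nat \<Rightarrow> 'a) \<Rightarrow> nat \<Rightarrow> 'b" where
  "mapfree \<phi> n x = (\<lambda>i\<in>{..<n}. \<phi> (x i))"

lemma hom_free_lc:
  assumes "ring_hom_cring R R' \<phi>" "d \<in> {..<t} \<rightarrow> carrier R" "\<kappa> \<in> {..<t} \<rightarrow> carrier (free_module R n)"
  shows "mapfree \<phi> n (lin_comb (free_module R n) t d \<kappa>) =
         lin_comb (free_module R' n) t (\<lambda>l. \<phi> (d l)) (\<lambda>l. mapfree \<phi> n (\<kappa> l))"
proof -
  interpret h: ring_hom_cring R R' \<phi> by fact
  interpret F: fmod R "free_module R n" by (rule fmod_free) unfold_locales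
  interpret F': fmod R' "free_module R' n" by (rule fmod_free) unfold_locales
  show ?thesis using assms(2,3)
  proof (induction t)
    case 0 then show ?case by (simp add: mapfree_def fun_eq_iff)
  next
    case (Suc t)
    have c: "d \<in> {..<t} \<rightarrow> carrier R" "\<kappa> \<in> {..<t} \<rightarrow> carrier (free_module R n)"
      using Suc.prems by (simp_all only: Pi_lessThan_Suc)
    have m: "(\<lambda>l. mapfree \<phi> n (\<kappa> l)) \<in> {..<Suc t} \<rightarrow> carrier (free_module R' n)"
      using Suc.prems by (auto simp: mapfree_def PiE_iff Pi_iff)
    have d': "(\<lambda>l. \<phi> (d l)) \<in> {..<Suc t} \<rightarrow> carrier R'" using Suc.prems by auto
    have lcc: "lin_comb (free_module R n) t d \<kappa> \<in> carrier (free_module R n)" using c by (rule F.lc_closed)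
    have kt: "\<kappa> t \<in> carrier (free_module R n)" "d t \<in> carrier R" using Suc.prems by auto
    have "mapfree \<phi> n (lin_comb (free_module R n) (Suc t) d \<kappa>) =
          mapfree \<phi> n (lin_comb (free_module R n) t d \<kappa>) \<oplus>\<^bsub>free_module R' n\<^esub>
          \<phi> (d t) \<odot>\<^bsub>free_module R' n\<^esub> mapfree \<phi> n (\<kappa> t)"
      unfolding F.lc_Suc[OF Suc.prems] using lcc kt
      by (auto simp: mapfree_def fun_eq_iff PiE_iff Pi_iff)
    also have "\<dots> = lin_comb (free_module R' n) (Suc t) (\<lambda>l. \<phi> (d l)) (\<lambda>l. mapfree \<phi> n (\<kappa> l))"
      unfolding F'.lc_Suc[OF d' m] Suc.IH[OF c] ..
    finally show ?case .
  qed
qed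

context amal
begin

lemma fmodS: "fmod S (ring_module S)" by (rule fmod_ring_module[OF cring_S])
lemma fmodA: "fmod A (ring_module A)" by (rule fmod_ring_module[OF A])

lemma hom_iota: "ring_hom_cring A S \<iota>"
  by (simp add: ring_hom_cring_def ring_hom_cring_axioms_def A cring_S \<iota>_hom)
lemma hom_fst: "ring_hom_cring S A fst"
  by (simp add: ring_hom_cring_def ring_hom_cring_axioms_def A cring_S fst_hom)

lemma part1:
  assumes coh: "coherent_ring S"
  shows "coherent_ring A"
  unfolding coherent_ring_def coherent_module_def
proof (intro conjI allI impI)
  interpret MA: fmod A "ring_module A" by (rule fmodA)
  interpret MS: fmod S "ring_module S" by (rule fmodS)
  interpret FA: fmod A "free_module A k" for k by (rule fmod_free[OF A])
  interpret FS: fmod S "free_module S k" for k by (rule fmod_free[OF cring_S])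
  show "fin_gen A (ring_module A) (carrier (ring_module A))" using ring_fg_self[OF A] by simp
  fix N assume N: "N \<subseteq> carrier (ring_module A) \<and> fin_gen A (ring_module A) N"
  then have N1: "fin_gen A (ring_module A) N" and N2: "N \<subseteq> carrier (ring_module A)" by auto
  obtain n a where a: "a \<in> {..<n} \<rightarrow> N" "N = span_gens A (ring_module A) n a"
    "a \<in> {..<n} \<rightarrow> carrier (ring_module A)"
    using MA.fin_genE[OF N1 N2] .
  have a3: "a \<in> {..<n} \<rightarrow> carrier A" using a(3) by simp
  have Nsub: "submodule N A (ring_module A)" using MA.span_submodule[of a n] a by simp
  define u where "u i = \<iota> (a i)" for i
  have uc: "u \<in> {..<n} \<rightarrow> carrier S" using a3 \<iota>_closed unfolding u_def by auto
  define J where "J = span_gens S (ring_module S) n u"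
  have Jsub: "submodule J S (ring_module S)" unfolding J_def using MS.span_submodule[of u n] uc by simp
  have JS: "J \<subseteq> carrier S" using MS.submoduleE(1)[OF Jsub] by simp
  have uJ: "u \<in> {..<n} \<rightarrow> J" unfolding J_def using MS.span_gen_mem uc by auto
  have fgJ: "fin_gen S (ring_module S) J" by (rule MS.fin_genI[OF Jsub uJ]) (simp add: J_def)
  have fpJ: "fin_pres S ((ring_module S)\<lparr>carrier := J\<rparr>)"
    using coh JS fgJ unfolding coherent_ring_def coherent_module_def by auto
  have MJ: "fmod S ((ring_module S)\<lparr>carrier := J\<rparr>)" by (rule fmod_restrict[OF fmodS Jsub])
  have relJ: "fin_gen S (free_module S n) (relations S (ring_module S) n u)"
  proof -
    have "fin_gen S (free_module S n) (relations S ((ring_module S)\<lparr>carrier := J\<rparr>) n u)"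
      by (rule relations_fg[OF MJ fpJ]) (use uJ span_restrict[OF fmodS Jsub uJ] J_def in auto)
    then show ?thesis using relations_restrict[OF fmodS Jsub uJ] by simp
  qed
  have relsub: "relations S (ring_module S) n u \<subseteq> carrier (free_module S n)" unfolding relations_def by auto
  obtain t \<kappa> where \<kappa>: "\<kappa> \<in> {..<t} \<rightarrow> relations S (ring_module S) n u"
    "relations S (ring_module S) n u = span_gens S (free_module S n) t \<kappa>"
    "\<kappa> \<in> {..<t} \<rightarrow> carrier (free_module S n)"
    using FS.fin_genE[OF relJ relsub] .
  define P :: "(nat \<Rightarrow> 'a \<times> 'b) \<Rightarrow> nat \<Rightarrow> 'a" where "P x = mapfree fst n x" for x
  define RA where "RA = relations A (ring_module A) n a"
  have RAsub: "submodule RA A (free_module A n)"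
  proof -
    have "RA = {x \<in> carrier (free_module A n). lin_comb (ring_module A) n x a = \<zero>\<^bsub>ring_module A\<^esub>}"
      unfolding RA_def relations_def by simp
    then show ?thesis using kernel_submodule[OF fmod_free[OF A] fmodA lcmap_linear[OF fmodA]] a3 by simp
  qed
  have Pk: "(\<lambda>l. P (\<kappa> l)) \<in> {..<t} \<rightarrow> RA"
  proof
    fix l assume l: "l \<in> {..<t}"
    have kl: "\<kappa> l \<in> {..<n} \<rightarrow>\<^sub>E carrier S" "lin_comb (ring_module S) n (\<kappa> l) u = \<zero>\<^bsub>S\<^esub>"
      using \<kappa>(1) l unfolding relations_def by auto
    have kl': "\<kappa> l \<in> {..<n} \<rightarrow> carrier S" using kl(1) by (simp add: PiE_def)
    have "fst (lin_comb (ring_module S) n (\<kappa> l) u) = lin_comb (ring_module A) n (\<lambda>i. fst (\<kappa> l i)) (\<lambda>i. fst (u i))"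
      by (rule hom_lc_ring[OF hom_fst kl' uc])
    also have "\<dots> = lin_comb (ring_module A) n (P (\<kappa> l)) a"
      using kl' a3 S_sub by (intro MA.lc_cong) (auto simp: P_def mapfree_def u_def \<iota>_def Pi_iff)
    finally have "lin_comb (ring_module A) n (P (\<kappa> l)) a = \<zero>\<^bsub>A\<^esub>" using kl(2) by simp
    moreover have "P (\<kappa> l) \<in> {..<n} \<rightarrow>\<^sub>E carrier A" using kl' S_sub by (auto simp: P_def mapfree_def Pi_iff)
    ultimately show "P (\<kappa> l) \<in> RA" unfolding RA_def relations_def by simp
  qed
  have "RA \<subseteq> span_gens A (free_module A n) t (\<lambda>l. P (\<kappa> l))"
  proof
    fix r assume r: "r \<in> RA"
    then have rc: "r \<in> {..<n} \<rightarrow>\<^sub>E carrier A" and r0: "lin_comb (ring_module A) n r a = \<zero>\<^bsub>A\<^esub>"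
      unfolding RA_def relations_def by auto
    have rc': "r \<in> {..<n} \<rightarrow> carrier A" using rc by (simp add: PiE_def)
    define L where "L = mapfree \<iota> n r"
    have Lc: "L \<in> {..<n} \<rightarrow>\<^sub>E carrier S" unfolding L_def mapfree_def using rc' \<iota>_closed by auto
    have Lc': "L \<in> {..<n} \<rightarrow> carrier S" using Lc by (simp add: PiE_def)
    have "lin_comb (ring_module S) n L u = lin_comb (ring_module S) n (\<lambda>i. \<iota> (r i)) (\<lambda>i. \<iota> (a i))"
      using Lc' uc by (intro MS.lc_cong) (auto simp: L_def mapfree_def u_def)
    also have "\<dots> = \<iota> (lin_comb (ring_module A) n r a)" by (rule hom_lc_ring[OF hom_iota rc' a3, symmetric])
    also have "\<dots> = \<zero>\<^bsub>S\<^esub>" using r0 by (simp add: \<iota>_def)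
    finally have "L \<in> relations S (ring_module S) n u" unfolding relations_def using Lc by simp
    then obtain d where d: "d \<in> {..<t} \<rightarrow> carrier S" "L = lin_comb (free_module S n) t d \<kappa>"
      using \<kappa>(2) unfolding span_gens_def by blast
    have "P L = lin_comb (free_module A n) t (\<lambda>l. fst (d l)) (\<lambda>l. P (\<kappa> l))"
      unfolding P_def d(2) by (rule hom_free_lc[OF hom_fst d(1) \<kappa>(3)])
    moreover have "P L = r" using rc by (auto simp: P_def L_def mapfree_def \<iota>_def fun_eq_iff PiE_iff extensional_def)
    moreover have "(\<lambda>l. fst (d l)) \<in> {..<t} \<rightarrow> carrier A"
    proof
      fix l assume "l \<in> {..<t}"
      then have "d l \<in> carrier S" using d(1) by blast
      then show "fst (d l) \<in> carrier A" using S_sub by blast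
    qed
    ultimately show "r \<in> span_gens A (free_module A n) t (\<lambda>l. P (\<kappa> l))" unfolding span_gens_def by auto
  qed
  then have fgRA: "fin_gen A (free_module A n) RA" by (rule FA.fin_genI[OF RAsub Pk])
  show "fin_pres A ((ring_module A)\<lparr>carrier := N\<rparr>)"
    unfolding fin_pres_def
  proof (intro exI conjI)
    show "a \<in> {..<n} \<rightarrow> carrier ((ring_module A)\<lparr>carrier := N\<rparr>)" using a(1) by simp
    show "carrier ((ring_module A)\<lparr>carrier := N\<rparr>) = span_gens A ((ring_module A)\<lparr>carrier := N\<rparr>) n a"
      using span_restrict[OF fmodA Nsub a(1)] a(2) by simp
    show "fin_gen A (free_module A n) (relations A ((ring_module A)\<lparr>carrier := N\<rparr>) n a)"
      using relations_restrict[OF fmodA Nsub a(1)] fgRA RA_def by simp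
  qed
qed

end


lemma linmap_rscal:
  assumes "linmap S M N \<phi>" "\<iota> \<in> ring_hom A S"
  shows "linmap A (rscal \<iota> M) (rscal \<iota> N) \<phi>"
  using assms unfolding linmap_def by (auto simp: ring_hom_def)

lemma (in fmod) span_cong:
  assumes "\<And>i. i < n \<Longrightarrow> g i = g' i" "g \<in> {..<n} \<rightarrow> carrier M"
  shows "span_gens R M n g = span_gens R M n g'"
proof -
  have "\<And>c. c \<in> {..<n} \<rightarrow> carrier R \<Longrightarrow> lin_comb M n c g = lin_comb M n c g'"
    using assms by (intro lc_cong) auto
  then show ?thesis unfolding span_gens_def by (metis (no_types, lifting))
qed

lemma divmod_aux:
  assumes "k * q \<le> (i::nat)" "i < k * q + q"
  shows "i div q = k" "i mod q = i - k * q"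
proof -
  obtain j where j: "i = k * q + j" "j < q" using assms by (metis add_less_cancel_left le_Suc_ex)
  then show "i div q = k" "i mod q = i - k * q" by auto
qed

lemma fg_rscal:
  fixes M :: "('b,'c) module" and S :: "('b,'n) ring_scheme" and A :: "('a,'k) ring_scheme"
  assumes MM: "fmod S M" and AA: "cring A" and hom: "\<iota> \<in> ring_hom A S"
    and fgM: "fin_gen S M (carrier M)" and fgS: "fin_gen A (rscal \<iota> (ring_module S)) (carrier S)"
  shows "fin_gen A (rscal \<iota> M) (carrier M)"
proof -
  interpret M: fmod S M by fact
  interpret MA: fmod A "rscal \<iota> M" by (rule fmod_rscal[OF MM AA hom])
  interpret SA: fmod A "rscal \<iota> (ring_module S)" by (rule fmod_rscal[OF fmod_ring_module[OF M.is_cring] AA hom])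
  obtain n m where m: "m \<in> {..<n} \<rightarrow> carrier M" "carrier M = span_gens S M n m"
    using fgM unfolding fin_gen_def by blast
  obtain q s where s: "s \<in> {..<q} \<rightarrow> carrier S" "carrier S = span_gens A (rscal \<iota> (ring_module S)) q s"
    using fgS unfolding fin_gen_def by auto
  define G where "G idx = s (idx mod q) \<odot>\<^bsub>M\<^esub> m (idx div q)" for idx
  have Gc: "G \<in> {..<k*q} \<rightarrow> carrier M" if "k \<le> n" for k
  proof
    fix i assume i: "i \<in> {..<k*q}"
    then have q0: "q > 0" by (cases q) auto
    have "i div q < k" using i by (simp add: less_mult_imp_div_less)
    moreover have "i mod q < q" using q0 by simp
    ultimately show "G i \<in> carrier M" unfolding G_def using m(1) s(1) that by (intro M.smult_closed) auto
  qed
  have main: "k \<le> n \<Longrightarrow> c \<in> {..<k} \<rightarrow> carrier S \<Longrightarrow> lin_comb M k c m \<in> span_gens A (rscal \<iota> M) (k*q) G" for k c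
  proof (induction k)
    case 0
    show ?case using MA.span_zero[of G 0] by simp
  next
    case (Suc k)
    have ck: "c k \<in> carrier S" using Suc.prems by auto
    then obtain \<alpha> where \<alpha>: "\<alpha> \<in> {..<q} \<rightarrow> carrier A" "c k = lin_comb (rscal \<iota> (ring_module S)) q \<alpha> s"
      using s(2) unfolding span_gens_def by blast
    have mk: "m k \<in> carrier M" using m(1) Suc.prems by auto
    define \<mu> where "\<mu> y = y \<odot>\<^bsub>M\<^esub> m k" for y
    have \<mu>lin: "linmap A (rscal \<iota> (ring_module S)) (rscal \<iota> M) \<mu>"
      unfolding linmap_def \<mu>_def using mk ring_hom_closed[OF hom]
      by (auto simp: M.smult_l_distr M.smult_assoc1)
    have "c k \<odot>\<^bsub>M\<^esub> m k = lin_comb (rscal \<iota> M) q \<alpha> (\<lambda>j. \<mu> (s j))"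
      unfolding \<alpha>(2) \<mu>_def[symmetric]
      by (rule lc_linear[OF SA.module_axioms MA.module_axioms \<mu>lin \<alpha>(1)]) (use s(1) in simp)
    then have "c k \<odot>\<^bsub>M\<^esub> m k \<in> span_gens A (rscal \<iota> M) q (\<lambda>j. \<mu> (s j))"
      unfolding span_gens_def using \<alpha>(1) by blast
    moreover have "lin_comb M k c m \<in> span_gens A (rscal \<iota> M) (k*q) G"
      using Suc by (simp add: Pi_lessThan_Suc)
    moreover have Gk: "G \<in> {..<k*q} \<rightarrow> carrier (rscal \<iota> M)" using Gc[of k] Suc.prems by simp
    moreover have \<mu>s: "(\<lambda>j. \<mu> (s j)) \<in> {..<q} \<rightarrow> carrier (rscal \<iota> M)" using s(1) mk unfolding \<mu>_def by auto
    ultimately have "lin_comb M k c m \<oplus>\<^bsub>M\<^esub> c k \<odot>\<^bsub>M\<^esub> m k \<in>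
        span_gens A (rscal \<iota> M) (k*q + q) (\<lambda>i. if i < k*q then G i else \<mu> (s (i - k*q)))"
      using MA.span_append[of _ "k*q" G _ q "\<lambda>j. \<mu> (s j)"] by simp
    also have "\<dots> = span_gens A (rscal \<iota> M) (k*q + q) G"
    proof (rule MA.span_cong)
      show "\<And>i. i < k*q + q \<Longrightarrow> (if i < k*q then G i else \<mu> (s (i - k*q))) = G i"
        using divmod_aux unfolding G_def \<mu>_def by (auto simp: not_less)
      show "(\<lambda>i. if i < k*q then G i else \<mu> (s (i - k*q))) \<in> {..<k*q + q} \<rightarrow> carrier (rscal \<iota> M)"
        using Gk \<mu>s by (auto simp: Pi_iff)
    qed
    finally have "lin_comb M k c m \<oplus>\<^bsub>M\<^esub> c k \<odot>\<^bsub>M\<^esub> m k \<in> span_gens A (rscal \<iota> M) (k*q + q) G" .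
    moreover have mSk: "m \<in> {..<Suc k} \<rightarrow> carrier M" using m(1) Suc.prems by auto
    ultimately show ?case using M.lc_Suc[OF Suc.prems(2) mSk] by (simp add: add.commute)
  qed
  show ?thesis
  proof (rule MA.fin_genI)
    show "submodule (carrier M) A (rscal \<iota> M)" using MA.carrier_is_submodule by simp
    show "G \<in> {..<n*q} \<rightarrow> carrier M" using Gc by simp
    show "carrier M \<subseteq> span_gens A (rscal \<iota> M) (n*q) G"
      using main m(2) unfolding span_gens_def[of S M] by auto
  qed
qed

lemma descent:
  fixes M :: "('b,'c) module" and S :: "('b,'n) ring_scheme" and A :: "('a,'k) ring_scheme"
  assumes MM: "fmod S M" and AA: "cring A" and hom: "\<iota> \<in> ring_hom A S"
    and fgM: "fin_gen S M (carrier M)" and fgS: "fin_gen A (rscal \<iota> (ring_module S)) (carrier S)"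
    and fpA: "fin_pres A (rscal \<iota> M)"
  shows "fin_pres S M"
proof -
  interpret M: fmod S M by fact
  interpret F: fmod S "free_module S k" for k by (rule fmod_free[OF M.is_cring])
  obtain n u where u: "u \<in> {..<n} \<rightarrow> carrier M" "carrier M = span_gens S M n u"
    using fgM unfolding fin_gen_def by blast
  have FA: "fmod A (rscal \<iota> (free_module S n))" by (rule fmod_rscal[OF fmod_free[OF M.is_cring] AA hom])
  have MA: "fmod A (rscal \<iota> M)" by (rule fmod_rscal[OF MM AA hom])
  have lin: "linmap A (rscal \<iota> (free_module S n)) (rscal \<iota> M) (\<lambda>c. lin_comb M n c u)"
    by (rule linmap_rscal[OF lcmap_linear[OF MM u(1)] hom])
  have surj: "\<exists>x\<in>carrier (rscal \<iota> (free_module S n)). lin_comb M n x u = y" if y: "y \<in> carrier (rscal \<iota> M)" for y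
  proof -
    obtain c where c: "c \<in> {..<n} \<rightarrow> carrier S" "y = lin_comb M n c u"
      using y u(2) unfolding span_gens_def by auto
    have "restrict c {..<n} \<in> carrier (free_module S n)" using c by auto
    moreover have "lin_comb M n (restrict c {..<n}) u = y" using c u by (simp add: M.lc_restrict_coeff)
    ultimately show ?thesis unfolding rscal_simps by blast
  qed
  have fgFA: "fin_gen A (rscal \<iota> (free_module S n)) (carrier (free_module S n))"
    by (rule fg_rscal[OF fmod_free[OF M.is_cring] AA hom free_fin_gen[OF M.is_cring] fgS])
  have "fin_gen A (rscal \<iota> (free_module S n)) {x \<in> carrier (rscal \<iota> (free_module S n)). lin_comb M n x u = \<zero>\<^bsub>rscal \<iota> M\<^esub>}"
    by (rule kernel_fg[OF FA MA lin surj]) (use fgFA fpA in simp_all)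
  moreover have "{x \<in> carrier (rscal \<iota> (free_module S n)). lin_comb M n x u = \<zero>\<^bsub>rscal \<iota> M\<^esub>} = relations S M n u"
    unfolding relations_def by simp
  ultimately have rel: "fin_gen A (rscal \<iota> (free_module S n)) (relations S M n u)" by simp
  have relsub: "relations S M n u \<subseteq> carrier (rscal \<iota> (free_module S n))" unfolding relations_def by auto
  obtain t \<kappa> where \<kappa>: "\<kappa> \<in> {..<t} \<rightarrow> relations S M n u"
    "relations S M n u = span_gens A (rscal \<iota> (free_module S n)) t \<kappa>"
    "\<kappa> \<in> {..<t} \<rightarrow> carrier (rscal \<iota> (free_module S n))"
    using fmod.fin_genE[OF FA rel relsub] .
  have Relsub: "submodule (relations S M n u) S (free_module S n)"
  proof -
    have "relations S M n u = {x \<in> carrier (free_module S n). lin_comb M n x u = \<zero>\<^bsub>M\<^esub>}"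
      unfolding relations_def by simp
    then show ?thesis using kernel_submodule[OF fmod_free[OF M.is_cring] MM lcmap_linear[OF MM u(1)]] by simp
  qed
  have "relations S M n u \<subseteq> span_gens S (free_module S n) t \<kappa>"
    using \<kappa>(2) span_rscal_sub[OF fmod_free[OF M.is_cring] hom] \<kappa>(3) by auto
  then have "fin_gen S (free_module S n) (relations S M n u)" by (rule F.fin_genI[OF Relsub \<kappa>(1)])
  then show ?thesis unfolding fin_pres_def using u by blast
qed


context amal
begin

abbreviation "bmod \<equiv> ideal_module_via A B f b"
abbreviation "SA \<equiv> rscal \<iota> (ring_module S)"

lemma bmod_eq: "bmod = rscal f ((ring_module B)\<lparr>carrier := b\<rparr>)"
  by (simp add: ideal_module_via_def rscal_def ring_module_def)

lemma fmod_bmod: "fmod A bmod"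
  unfolding bmod_eq
  by (rule fmod_rscal[OF fmod_restrict[OF fmod_ring_module[OF B] ideal_submodule[OF B b]] A f])

lemma bmod_simps[simp]:
  "carrier bmod = b" "x \<oplus>\<^bsub>bmod\<^esub> y = x \<oplus>\<^bsub>B\<^esub> y" "\<zero>\<^bsub>bmod\<^esub> = \<zero>\<^bsub>B\<^esub>" "a \<odot>\<^bsub>bmod\<^esub> x = f a \<otimes>\<^bsub>B\<^esub> x"
  by (simp_all add: ideal_module_via_def)

lemma fmod_SA: "fmod A SA" by (rule fmod_rscal[OF fmodS A \<iota>_hom])

lemma zero_pair: "y \<in> b \<Longrightarrow> (\<zero>\<^bsub>A\<^esub>, y) \<in> carrier S"
  using S_memI[of "\<zero>\<^bsub>A\<^esub>" y] bB by simp

lemma SA_fg: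
  assumes fgb: "fin_gen A bmod b"
  shows "fin_gen A SA (carrier S)"
proof -
  interpret SA: fmod A SA by (rule fmod_SA)
  interpret BM: fmod A bmod by (rule fmod_bmod)
  obtain q z where z: "z \<in> {..<q} \<rightarrow> b" "b = span_gens A bmod q z"
    using fgb unfolding fin_gen_def by blast
  define s where "s i = (if i = 0 then \<one>\<^bsub>S\<^esub> else (\<zero>\<^bsub>A\<^esub>, z (i - 1)))" for i
  have sc: "s \<in> {..<1+q} \<rightarrow> carrier S"
  proof
    fix i assume i: "i \<in> {..<1+q}"
    show "s i \<in> carrier S"
    proof (cases "i = 0")
      case True then show ?thesis unfolding s_def using S_one_closed by simp
    next
      case False
      then have "z (i - 1) \<in> b" using z(1) i by auto
      then show ?thesis unfolding s_def using False zero_pair by simp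
    qed
  qed
  define \<zeta> :: "'b \<Rightarrow> 'a \<times> 'b" where "\<zeta> y = (\<zero>\<^bsub>A\<^esub>, y)" for y
  have \<zeta>lin: "linmap A bmod SA \<zeta>"
    unfolding linmap_def
  proof (intro conjI ballI)
    show "\<zeta> \<in> carrier bmod \<rightarrow> carrier SA" using zero_pair by (auto simp: \<zeta>_def)
    fix x y assume x: "x \<in> carrier bmod" and y: "y \<in> carrier bmod"
    show "\<zeta> (x \<oplus>\<^bsub>bmod\<^esub> y) = \<zeta> x \<oplus>\<^bsub>SA\<^esub> \<zeta> y" by (simp add: \<zeta>_def)
  next
    fix a x assume a: "a \<in> carrier A" and x: "x \<in> carrier bmod"
    show "\<zeta> (a \<odot>\<^bsub>bmod\<^esub> x) = a \<odot>\<^bsub>SA\<^esub> \<zeta> x" using a by (simp add: \<zeta>_def \<iota>_def)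
  qed
  have "carrier S \<subseteq> span_gens A SA (1+q) s"
  proof
    fix x assume x: "x \<in> carrier S"
    then obtain a y where xa: "x = (a, f a \<oplus>\<^bsub>B\<^esub> y)" "a \<in> carrier A" "y \<in> b" by (rule S_cases)
    then obtain \<beta> where \<beta>: "\<beta> \<in> {..<q} \<rightarrow> carrier A" "y = lin_comb bmod q \<beta> z"
      using z(2) unfolding span_gens_def by blast
    define \<gamma> where "\<gamma> i = (if i = 0 then a else \<beta> (i - 1))" for i
    have \<gamma>c: "\<gamma> \<in> {..<1+q} \<rightarrow> carrier A" unfolding \<gamma>_def using xa \<beta> by (auto simp: Pi_iff)
    have "lin_comb SA (1+q) \<gamma> s = lin_comb SA 1 \<gamma> s \<oplus>\<^bsub>SA\<^esub> lin_comb SA q (\<lambda>i. \<gamma> (1+i)) (\<lambda>i. s (1+i))"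
      by (rule SA.lc_append) (use \<gamma>c sc in simp_all)
    also have "lin_comb SA 1 \<gamma> s = \<iota> a"
    proof -
      have g1: "\<gamma> \<in> {..<Suc 0} \<rightarrow> carrier A" using \<gamma>c by auto
      have s1: "s \<in> {..<Suc 0} \<rightarrow> carrier SA" using sc by auto
      have "lin_comb SA 1 \<gamma> s = \<zero>\<^bsub>S\<^esub> \<oplus>\<^bsub>S\<^esub> (\<iota> a \<otimes>\<^bsub>S\<^esub> \<one>\<^bsub>S\<^esub>)"
        using SA.lc_Suc[OF g1 s1] by (simp add: \<gamma>_def s_def del: amalg_simps)
      also have "\<dots> = \<iota> a" using \<iota>_closed[OF xa(2)] S_one_closed S_zero_closed
        by (simp del: amalg_simps)
      finally show ?thesis .
    qed
    also have "lin_comb SA q (\<lambda>i. \<gamma> (1+i)) (\<lambda>i. s (1+i)) = lin_comb SA q \<beta> (\<lambda>i. \<zeta> (z i))"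
      using \<beta> z(1) zero_pair by (intro SA.lc_cong) (auto simp: \<gamma>_def s_def \<zeta>_def)
    also have "\<dots> = \<zeta> y" unfolding \<beta>(2)
      by (rule lc_linear[OF BM.module_axioms SA.module_axioms \<zeta>lin \<beta>(1), symmetric]) (use z(1) in simp)
    also have "\<iota> a \<oplus>\<^bsub>SA\<^esub> \<zeta> y = x" using xa bB by (simp add: \<iota>_def \<zeta>_def)
    finally have "x = lin_comb SA (1+q) \<gamma> s" by simp
    then show "x \<in> span_gens A SA (1+q) s" unfolding span_gens_def using \<gamma>c by blast
  qed
  then show ?thesis by (intro SA.fin_genI[OF _ sc]) (use SA.carrier_is_submodule in simp_all)
qed

end


context amal
begin

lemma stepb:
  assumes cohA: "coherent_ring A" and cohb: "coherent_module A bmod"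
    and Jsub: "submodule J S (ring_module S)"
    and fgJA: "fin_gen A (rscal \<iota> ((ring_module S)\<lparr>carrier := J\<rparr>)) J"
  shows "fin_pres A (rscal \<iota> ((ring_module S)\<lparr>carrier := J\<rparr>))"
proof -
  define MA where "MA = rscal \<iota> ((ring_module S)\<lparr>carrier := J\<rparr>)"
  have MAf: "fmod A MA" unfolding MA_def by (rule fmod_rscal[OF fmod_restrict[OF fmodS Jsub] A \<iota>_hom])
  interpret MA: fmod A MA by (rule MAf)
  interpret RA: fmod A "ring_module A" by (rule fmodA)
  interpret BM: fmod A bmod by (rule fmod_bmod)
  interpret MS: fmod S "ring_module S" by (rule fmodS)
  have JS: "J \<subseteq> carrier S" using MS.submoduleE(1)[OF Jsub] by simp
  have MA_simps: "carrier MA = J" "\<And>x y. x \<oplus>\<^bsub>MA\<^esub> y = x \<oplus>\<^bsub>S\<^esub> y" "\<zero>\<^bsub>MA\<^esub> = \<zero>\<^bsub>S\<^esub>"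
    "\<And>a x. a \<odot>\<^bsub>MA\<^esub> x = \<iota> a \<otimes>\<^bsub>S\<^esub> x"
    unfolding MA_def by (simp_all add: rscal_def ring_module_def)
  have fJ: "\<And>x. x \<in> J \<Longrightarrow> fst x \<in> carrier A \<and> snd x \<in> carrier B" using JS S_sub by blast
  define I where "I = fst ` J"
  have fstlin: "linmap A MA (ring_module A) fst"
    unfolding linmap_def MA_simps using fJ by (auto simp: \<iota>_def)
  have fgI: "fin_gen A (ring_module A) I" unfolding I_def
    by (rule fin_gen_image'[OF MAf fmodA fstlin]) (use fgJA MA_simps MA_def in simp_all)
  have IA: "I \<subseteq> carrier A" unfolding I_def using fJ by auto
  have fpI: "fin_pres A ((ring_module A)\<lparr>carrier := I\<rparr>)"
    using cohA fgI IA unfolding coherent_ring_def coherent_module_def by simp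
  have Isub: "submodule I A (ring_module A)" using RA.fin_gen_submodule[OF fgI] IA by simp
  define QI where "QI = (ring_module A)\<lparr>carrier := I\<rparr>"
  have QIf: "fmod A QI" unfolding QI_def by (rule fmod_restrict[OF fmodA Isub])
  have lin2: "linmap A MA QI fst"
    unfolding linmap_def MA_simps QI_def using fJ by (auto simp: \<iota>_def I_def)
  have surj: "\<And>y. y \<in> carrier QI \<Longrightarrow> \<exists>x\<in>carrier MA. fst x = y" unfolding QI_def MA_simps I_def by auto
  define K where "K = {x \<in> carrier MA. fst x = \<zero>\<^bsub>QI\<^esub>}"
  have fgK: "fin_gen A MA K" unfolding K_def
    by (rule kernel_fg[OF MAf QIf lin2 surj]) (use fgJA MA_simps MA_def fpI QI_def in simp_all)
  have Ksub: "submodule K A MA" unfolding K_def by (rule kernel_submodule[OF MAf QIf lin2])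
  have K_eq: "K = {x \<in> J. fst x = \<zero>\<^bsub>A\<^esub>}" unfolding K_def MA_simps QI_def by simp
  have Kb: "snd x \<in> b" and Kpair: "x = (\<zero>\<^bsub>A\<^esub>, snd x)" if x: "x \<in> K" for x
  proof -
    have "x \<in> carrier S" "fst x = \<zero>\<^bsub>A\<^esub>" using x JS K_eq by auto
    then obtain a y where "x = (a, f a \<oplus>\<^bsub>B\<^esub> y)" "a \<in> carrier A" "y \<in> b" by (metis S_cases)
    then show "snd x \<in> b" "x = (\<zero>\<^bsub>A\<^esub>, snd x)" using \<open>fst x = \<zero>\<^bsub>A\<^esub>\<close> bB by auto
  qed
  define MK where "MK = MA\<lparr>carrier := K\<rparr>"
  have MKf: "fmod A MK" unfolding MK_def by (rule fmod_restrict[OF MAf Ksub])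
  have MK_simps: "carrier MK = K" "\<And>x y. x \<oplus>\<^bsub>MK\<^esub> y = x \<oplus>\<^bsub>S\<^esub> y" "\<zero>\<^bsub>MK\<^esub> = \<zero>\<^bsub>S\<^esub>"
    "\<And>a x. a \<odot>\<^bsub>MK\<^esub> x = \<iota> a \<otimes>\<^bsub>S\<^esub> x"
    unfolding MK_def using MA_simps by simp_all
  have sndlin: "linmap A MK bmod snd"
    unfolding linmap_def MK_simps using Kb by (auto simp: \<iota>_def)
  have fgK': "fin_gen A MK K" unfolding MK_def using fin_gen_restrict[OF MAf Ksub subset_refl] fgK by simp
  define Y where "Y = snd ` K"
  have fgY: "fin_gen A bmod Y" unfolding Y_def
    by (rule fin_gen_image'[OF MKf fmod_bmod sndlin fgK']) (simp add: MK_simps)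
  have Yb: "Y \<subseteq> b" unfolding Y_def using Kb by auto
  have fpY: "fin_pres A (bmod\<lparr>carrier := Y\<rparr>)"
    using cohb fgY Yb unfolding coherent_module_def by simp
  have Ysub: "submodule Y A bmod" using BM.fin_gen_submodule[OF fgY] Yb by simp
  define MY where "MY = bmod\<lparr>carrier := Y\<rparr>"
  have MYf: "fmod A MY" unfolding MY_def by (rule fmod_restrict[OF fmod_bmod Ysub])
  define \<psi> :: "'b \<Rightarrow> 'a \<times> 'b" where "\<psi> y = (\<zero>\<^bsub>A\<^esub>, y)" for y
  have \<psi>K: "\<psi> y \<in> K" if y: "y \<in> Y" for y
  proof -
    obtain x where "x \<in> K" "y = snd x" using y unfolding Y_def by blast
    then show ?thesis using Kpair unfolding \<psi>_def by metis
  qed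
  have K_J: "K \<subseteq> J" using K_eq by auto
  have \<psi>lin: "linmap A MY MK \<psi>"
    unfolding linmap_def MK_simps MY_def using \<psi>K[unfolded \<psi>_def] Yb bB by (auto simp: \<psi>_def \<iota>_def)
  have bij: "bij_betw \<psi> (carrier MY) (carrier MK)"
    unfolding bij_betw_def MY_def MK_simps
  proof
    show "inj_on \<psi> (carrier (bmod\<lparr>carrier := Y\<rparr>))" by (auto simp: inj_on_def \<psi>_def)
    show "\<psi> ` carrier (bmod\<lparr>carrier := Y\<rparr>) = K"
    proof
      show "\<psi> ` carrier (bmod\<lparr>carrier := Y\<rparr>) \<subseteq> K" using \<psi>K by auto
      show "K \<subseteq> \<psi> ` carrier (bmod\<lparr>carrier := Y\<rparr>)"
      proof
        fix x assume x: "x \<in> K"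
        then have "x = \<psi> (snd x)" using Kpair unfolding \<psi>_def by simp
        then show "x \<in> \<psi> ` carrier (bmod\<lparr>carrier := Y\<rparr>)" using x unfolding Y_def by auto
      qed
    qed
  qed
  have fpK: "fin_pres A MK" by (rule fin_pres_iso[OF MYf MKf \<psi>lin bij]) (use fpY MY_def in simp)
  have ker: "\<And>x. x \<in> carrier MA \<Longrightarrow> fst x = \<zero>\<^bsub>QI\<^esub> \<longleftrightarrow> x \<in> K" unfolding K_def by simp
  have "fin_pres A MA"
    by (rule fin_pres_ext[OF MAf QIf Ksub _ lin2 surj ker]) (use fpK MK_def fpI QI_def in simp_all)
  then show ?thesis unfolding MA_def .
qed

lemma part2:
  assumes cohA: "coherent_ring A" and cohb: "coherent_module A bmod"
  shows "coherent_ring S"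
  unfolding coherent_ring_def coherent_module_def
proof (intro conjI allI impI)
  interpret MS: fmod S "ring_module S" by (rule fmodS)
  show "fin_gen S (ring_module S) (carrier (ring_module S))" using ring_fg_self[OF cring_S] by simp
  fix N assume N: "N \<subseteq> carrier (ring_module S) \<and> fin_gen S (ring_module S) N"
  then have N1: "fin_gen S (ring_module S) N" and N2: "N \<subseteq> carrier (ring_module S)" by auto
  have Nsub: "submodule N S (ring_module S)" by (rule MS.fin_gen_submodule[OF N1 N2])
  define MJ where "MJ = (ring_module S)\<lparr>carrier := N\<rparr>"
  have MJf: "fmod S MJ" unfolding MJ_def by (rule fmod_restrict[OF fmodS Nsub])
  have fgMJ: "fin_gen S MJ (carrier MJ)" unfolding MJ_def
    using fin_gen_restrict[OF fmodS Nsub subset_refl] N1 by simp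
  have fgb: "fin_gen A bmod b" using cohb unfolding coherent_module_def by simp
  have fgSA: "fin_gen A SA (carrier S)" by (rule SA_fg[OF fgb])
  have fgJA: "fin_gen A (rscal \<iota> MJ) (carrier MJ)" by (rule fg_rscal[OF MJf A \<iota>_hom fgMJ fgSA])
  have fpA: "fin_pres A (rscal \<iota> MJ)" unfolding MJ_def
    by (rule stepb[OF cohA cohb Nsub]) (use fgJA MJ_def in simp)
  show "fin_pres S ((ring_module S)\<lparr>carrier := N\<rparr>)"
    using descent[OF MJf A \<iota>_hom fgMJ fgSA fpA] unfolding MJ_def .
qed

end

theorem proposition4p14:
  fixes A :: "('a, 'n) ring_scheme" and B :: "('b, 'm) ring_scheme"
    and f :: "'a \<Rightarrow> 'b" and b :: "'b set"
  assumes "cring A" and "cring B" and "f \<in> ring_hom A B" and "ideal b B"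
  shows "(coherent_ring (amalg A B f b) \<longrightarrow> coherent_ring A)
       \<and> (coherent_ring A \<and> coherent_module A (ideal_module_via A B f b)
            \<longrightarrow> coherent_ring (amalg A B f b))"
proof -
  interpret amal A B f b by (rule amal.intro) (rule assms)+
  have 1: "coherent_ring (amalg A B f b) \<longrightarrow> coherent_ring A" using part1 by (intro impI)
  have 2: "coherent_ring A \<and> coherent_module A (ideal_module_via A B f b) \<longrightarrow> coherent_ring (amalg A B f b)"
    using part2 by (intro impI) (elim conjE)
  show ?thesis using 1 2 by (rule conjI)
qed


end
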